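(* Consider a quantum spin system on the $\nu$-dimensional hypercubic lattice with $N$ sites and a finite-dimensional single-site Hilbert space. For $i=0,\dots,m-1$ let $\hat X_{N(i)}=\sum_j\gamma_j(\hat o_{(i)})$, where $\gamma_j$ is the lattice translation by $j$ and $\hat o_{(i)}$ is an $N$-independent self-adjoint local observable, and let $\hat x_{N(i)}=\hat X_{N(i)}/N$. Let $\check{\boldsymbol X}_N=(\check X_{N(0)},\dots,\check X_{N(m-1)})$ be self-adjoint operators with $\lim_{N\to\infty}\|\hat X_{N(i)}-\check X_{N(i)}\|=0$ and $[\check X_{N(i)},\check X_{N(j)}]=0$ for all $i,j$, and $\check x_{N(i)}=\check X_{N(i)}/N$. Let $\eta$ be an $N$-independent polynomial with real coefficients in $m$ noncommutative indeterminates such that $\eta(\hat{\boldsymbol x}_N)$ is self-adjoint for all $N$. For $\dot{\ }\in\{\hat{\ },\check{\ }\}$ define $\psi_N^{\dot\eta}=-\frac1N\log\mathrm{Tr}[e^{-N\eta(\dot{\boldsymbol x}_N)}]$. If $\psi_N^{\hat\eta}$ and $\psi_N^{\check\eta}$ both converge as $N\to\infty$, then $\lim_{N\to\infty}\psi_N^{\hat\eta}=\lim_{N\to\infty}\psi_N^{\check\eta}$.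
   Context: $\|\cdot\|$ is the operator norm. $\psi_N^{\dot\eta}$ is the (finite-size) thermodynamic function of the squeezed ensemble $e^{-N\eta(\dot{\boldsymbol x}_N)}/\mathrm{Tr}[e^{-N\eta(\dot{\boldsymbol x}_N)}]$. *)

theory Defs
  imports "HOL-Analysis.Analysis" "Jordan_Normal_Form.Matrix"
begin

definition selfadjoint :: "nat \<Rightarrow> complex mat \<Rightarrow> bool" where
  "selfadjoint n A \<longleftrightarrow> A \<in> carrier_mat n n \<and>
     (\<forall>i<n. \<forall>j<n. A $$ (i, j) = cnj (A $$ (j, i)))"

definition mtrace :: "complex mat \<Rightarrow> complex" where
  "mtrace A = (\<Sum>i<dim_row A. A $$ (i, i))"

definition mexp :: "complex mat \<Rightarrow> complex mat" where
  "mexp A = mat (dim_row A) (dim_col A)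
     (\<lambda>(i, j). (\<Sum>k. (A ^\<^sub>m k) $$ (i, j) / of_nat (fact k)))"

definition vnorm :: "complex vec \<Rightarrow> real" where
  "vnorm v = sqrt (\<Sum>i<dim_vec v. (cmod (v $ i))\<^sup>2)"

definition opnorm :: "complex mat \<Rightarrow> real" where
  "opnorm A = Sup {vnorm (A *\<^sub>v v) | v. v \<in> carrier_vec (dim_col A) \<and> vnorm v \<le> 1}"

text \<open>Lattice: the periodic hypercube \<open>{0..<L}^nu\<close>, N = L^nu sites; site k has
  coordinates \<open>coord L k a\<close> (a < nu), i.e. its base-L digits.\<close>

definition coord :: "nat \<Rightarrow> nat \<Rightarrow> nat \<Rightarrow> nat" where
  "coord K k a = (k div K ^ a) mod K"

definition site_of :: "nat \<Rightarrow> nat \<Rightarrow> (nat \<Rightarrow> nat) \<Rightarrow> nat" where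
  "site_of nu L x = (\<Sum>a<nu. (x a mod L) * L ^ a)"

text \<open>Basis states of the N-site Hilbert space (C^d)^{\<otimes>N} are indexed by
  c < d^N; the state of site k is the k-th base-d digit.\<close>
definition digit :: "nat \<Rightarrow> nat \<Rightarrow> nat \<Rightarrow> nat" where
  "digit d c k = (c div d ^ k) mod d"

text \<open>Site of the translate by lattice vector (site) j of the box site b of the
  box \<open>{0..<r}^nu\<close>.\<close>
definition shift :: "nat \<Rightarrow> nat \<Rightarrow> nat \<Rightarrow> nat \<Rightarrow> nat \<Rightarrow> nat" where
  "shift nu L r j b = site_of nu L (\<lambda>a. coord L j a + coord r b a)"

text \<open>\<open>gamma_j(o)\<close>: the local observable o acting on the box \<open>{0..<r}^nu\<close>
  (matrix of size d^(r^nu)), translated by j and embedded into the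
  N-site system (tensored with the identity elsewhere).\<close>
definition translate_obs ::
  "nat \<Rightarrow> nat \<Rightarrow> nat \<Rightarrow> nat \<Rightarrow> complex mat \<Rightarrow> nat \<Rightarrow> complex mat" where
  "translate_obs nu d r L ob j =
     (let N = L ^ nu; n = d ^ N;
          reg = shift nu L r j ` {..<r ^ nu};
          enc = (\<lambda>c. \<Sum>b<r ^ nu. digit d c (shift nu L r j b) * d ^ b)
      in mat n n (\<lambda>(c, c').
           if (\<forall>k<N. k \<notin> reg \<longrightarrow> digit d c k = digit d c' k)
           then ob $$ (enc c, enc c') else 0))"

definition Xhat :: "nat \<Rightarrow> nat \<Rightarrow> nat \<Rightarrow> nat \<Rightarrow> complex mat \<Rightarrow> complex mat" where
  "Xhat nu d r L ob =
     mat (d ^ (L ^ nu)) (d ^ (L ^ nu))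
       (\<lambda>ij. \<Sum>j<L ^ nu. translate_obs nu d r L ob j $$ ij)"

text \<open>Noncommutative polynomials with real coefficients: coefficient function
  on words (lists of indeterminate indices), finitely supported.\<close>
definition word_prod :: "nat \<Rightarrow> (nat \<Rightarrow> complex mat) \<Rightarrow> nat list \<Rightarrow> complex mat" where
  "word_prod n x w = foldr (\<lambda>i A. x i * A) w (1\<^sub>m n)"

definition nc_eval :: "nat \<Rightarrow> (nat list \<Rightarrow> real) \<Rightarrow> (nat \<Rightarrow> complex mat) \<Rightarrow> complex mat" where
  "nc_eval n eta x = mat n n (\<lambda>ij. \<Sum>w\<in>{w. eta w \<noteq> 0}.
      complex_of_real (eta w) * word_prod n x w $$ ij)"

definition psi :: "nat \<Rightarrow> nat \<Rightarrow> (nat list \<Rightarrow> real) \<Rightarrow> (nat \<Rightarrow> complex mat) \<Rightarrow> real" where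
  "psi n N eta X =
     - ln (Re (mtrace (mexp ((- of_nat N) \<cdot>\<^sub>m
          nc_eval n eta (\<lambda>i. (1 / of_nat N) \<cdot>\<^sub>m X i))))) / real N"

end

theory Submission imports Defs "Jordan_Normal_Form.Spectral_Radius" "Jordan_Normal_Form.Schur_Decomposition" begin

lemma vnorm_L2: fixes v :: "complex vec" shows "vnorm v = L2_set (\<lambda>i. cmod (v $ i)) {..<dim_vec v}"
  unfolding vnorm_def L2_set_def by simp

lemma vnorm_nonneg: "0 \<le> vnorm v"
  unfolding vnorm_def by (simp add: sum_nonneg)

lemma vnorm_mono:
  fixes w :: "complex vec"
  assumes "dim_vec w = n" "\<And>i. i < n \<Longrightarrow> cmod (w $ i) \<le> b i"
  shows "vnorm w \<le> L2_set b {..<n}"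
  unfolding vnorm_L2 using assms by (auto intro!: L2_set_mono)

lemma vnorm_add:
  fixes u v :: "complex vec"
  assumes "dim_vec u = dim_vec v"
  shows "vnorm (u + v) \<le> vnorm u + vnorm v"
proof -
  have "vnorm (u + v) \<le> L2_set (\<lambda>i. cmod (u $ i) + cmod (v $ i)) {..<dim_vec v}"
    by (rule vnorm_mono) (use assms in \<open>auto intro: norm_triangle_ineq\<close>)
  also have "\<dots> \<le> vnorm u + vnorm v"
    unfolding vnorm_L2 using assms by (simp add: L2_set_triangle_ineq)
  finally show ?thesis .
qed

lemma vnorm_smult: fixes v :: "complex vec" shows "vnorm (c \<cdot>\<^sub>v v) = cmod c * vnorm v"
proof -
  have "vnorm (c \<cdot>\<^sub>v v) = L2_set (\<lambda>i. cmod c * cmod (v $ i)) {..<dim_vec v}"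
    unfolding vnorm_L2 by (intro L2_set_cong) (auto simp: norm_mult)
  also have "\<dots> = cmod c * vnorm v"
    unfolding vnorm_L2 by (simp add: L2_set_right_distrib)
  finally show ?thesis .
qed

lemma vnorm_zero_iff: fixes v :: "complex vec" shows "vnorm v = 0 \<longleftrightarrow> (\<forall>i<dim_vec v. v $ i = 0)"
  unfolding vnorm_def by (auto simp: sum_nonneg_eq_0_iff)

lemma cauchy_schwarz_vec:
  fixes u v :: "complex vec"
  assumes "dim_vec u = n" "dim_vec v = n"
  shows "cmod (\<Sum>i<n. u $ i * v $ i) \<le> vnorm u * vnorm v"
proof -
  have "cmod (\<Sum>i<n. u $ i * v $ i) \<le> (\<Sum>i<n. \<bar>cmod (u $ i)\<bar> * \<bar>cmod (v $ i)\<bar>)"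
    by (rule order_trans[OF norm_sum]) (simp add: norm_mult)
  also have "\<dots> \<le> vnorm u * vnorm v"
    unfolding vnorm_L2 using assms L2_set_mult_ineq[of "\<lambda>i. cmod (u $ i)" "\<lambda>i. cmod (v $ i)" "{..<n}"] by simp
  finally show ?thesis .
qed

definition frob :: "complex mat \<Rightarrow> real" where
  "frob A = L2_set (\<lambda>i. L2_set (\<lambda>j. cmod (A $$ (i, j))) {..<dim_col A}) {..<dim_row A}"

lemma mult_mat_vec_entry:
  assumes "i < dim_row A" "dim_vec v = dim_col A"
  shows "(A *\<^sub>v v) $ i = (\<Sum>j<dim_col A. A $$ (i, j) * v $ j)"
  using assms by (simp add: scalar_prod_def atLeast0LessThan)

lemma mat_vec_frob:
  assumes "dim_vec v = dim_col A"
  shows "vnorm (A *\<^sub>v v) \<le> frob A * vnorm v"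
proof -
  have "vnorm (A *\<^sub>v v) \<le> L2_set (\<lambda>i. L2_set (\<lambda>j. cmod (A $$ (i, j))) {..<dim_col A} * vnorm v) {..<dim_row A}"
  proof (rule vnorm_mono)
    fix i assume i: "i < dim_row A"
    have "cmod ((A *\<^sub>v v) $ i) = cmod (\<Sum>j<dim_col A. row A i $ j * v $ j)"
      by (subst mult_mat_vec_entry) (use i assms in auto)
    also have "\<dots> \<le> vnorm (row A i) * vnorm v"
      by (rule cauchy_schwarz_vec) (use assms in auto)
    also have "vnorm (row A i) = L2_set (\<lambda>j. cmod (A $$ (i, j))) {..<dim_col A}"
      unfolding vnorm_L2 using i by (intro L2_set_cong) auto
    finally show "cmod ((A *\<^sub>v v) $ i) \<le> L2_set (\<lambda>j. cmod (A $$ (i, j))) {..<dim_col A} * vnorm v" .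
  qed simp
  also have "\<dots> = frob A * vnorm v"
    unfolding frob_def by (simp add: L2_set_left_distrib[symmetric] vnorm_nonneg)
  finally show ?thesis .
qed

definition opset :: "complex mat \<Rightarrow> real set" where
  "opset A = {vnorm (A *\<^sub>v v) | v. v \<in> carrier_vec (dim_col A) \<and> vnorm v \<le> 1}"

lemma opnorm_opset: "opnorm A = Sup (opset A)"
  unfolding opnorm_def opset_def ..

lemma opset_bdd: "bdd_above (opset A)"
proof -
  have "x \<le> frob A" if "x \<in> opset A" for x
  proof -
    from that obtain v where v: "x = vnorm (A *\<^sub>v v)" "v \<in> carrier_vec (dim_col A)" "vnorm v \<le> 1"
      unfolding opset_def by auto
    have "x \<le> frob A * vnorm v" using v mat_vec_frob by auto
    also have "\<dots> \<le> frob A * 1"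
      by (rule mult_left_mono) (use v in \<open>auto simp: frob_def L2_set_nonneg\<close>)
    finally show ?thesis by simp
  qed
  then show ?thesis by (intro bdd_aboveI[where M="frob A"]) auto
qed

lemma vnorm_zero_vec[simp]: "vnorm (0\<^sub>v n) = 0"
  by (simp add: vnorm_def)

lemma opset_zero: "0 \<in> opset A"
proof -
  have "A *\<^sub>v 0\<^sub>v (dim_col A) = 0\<^sub>v (dim_row A)"
    by (intro eq_vecI) (auto simp: scalar_prod_def)
  then show ?thesis unfolding opset_def
    by (auto intro!: exI[of _ "0\<^sub>v (dim_col A)"])
qed

lemma opnorm_nonneg: "0 \<le> opnorm A"
  unfolding opnorm_opset using opset_zero opset_bdd by (rule cSup_upper)

lemma opnorm_bound:
  assumes v: "dim_vec v = dim_col A"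
  shows "vnorm (A *\<^sub>v v) \<le> opnorm A * vnorm v"
proof (cases "vnorm v = 0")
  case True
  then have "\<forall>i<dim_vec v. v $ i = 0" by (simp add: vnorm_zero_iff)
  then have "vnorm (A *\<^sub>v v) = 0" using v
    by (subst vnorm_zero_iff) (auto simp: scalar_prod_def)
  then show ?thesis using True by simp
next
  case False
  then have pos: "vnorm v > 0" using vnorm_nonneg[of v] by linarith
  define w where "w = complex_of_real (1 / vnorm v) \<cdot>\<^sub>v v"
  have w1: "vnorm w = 1" unfolding w_def vnorm_smult using pos by (simp add: norm_divide)
  have vc: "v \<in> carrier_vec (dim_col A)" using v by (rule carrier_vecI)
  have "A *\<^sub>v w = complex_of_real (1 / vnorm v) \<cdot>\<^sub>v (A *\<^sub>v v)"
    unfolding w_def by (rule mult_mat_vec[OF carrier_mat_triv vc])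
  then have e1: "vnorm (A *\<^sub>v w) = vnorm (A *\<^sub>v v) / vnorm v"
    using pos by (simp add: vnorm_smult norm_divide)
  have wc: "w \<in> carrier_vec (dim_col A)" unfolding w_def using vc by simp
  then have "vnorm (A *\<^sub>v w) \<in> opset A"
    unfolding opset_def using wc w1 by (intro CollectI exI[of _ w]) simp
  then have "vnorm (A *\<^sub>v w) \<le> opnorm A"
    unfolding opnorm_opset by (rule cSup_upper[OF _ opset_bdd])
  then have "vnorm (A *\<^sub>v v) / vnorm v \<le> opnorm A" using e1 by simp
  then show ?thesis using pos by (simp add: divide_le_eq)
qed

lemma opnorm_le:
  assumes K: "0 \<le> K" and h: "\<And>v. dim_vec v = dim_col A \<Longrightarrow> vnorm (A *\<^sub>v v) \<le> K * vnorm v"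
  shows "opnorm A \<le> K"
  unfolding opnorm_opset
proof (rule cSup_least)
  show "opset A \<noteq> {}" using opset_zero by auto
  fix x assume "x \<in> opset A"
  then obtain v where v: "x = vnorm (A *\<^sub>v v)" "v \<in> carrier_vec (dim_col A)" "vnorm v \<le> 1"
    unfolding opset_def by auto
  have "x \<le> K * vnorm v" using v h by auto
  also have "\<dots> \<le> K" using K v mult_left_mono[of "vnorm v" 1 K] by simp
  finally show "x \<le> K" .
qed

lemma vnorm_diff:
  fixes u w :: "complex vec"
  assumes "dim_vec u = dim_vec w"
  shows "vnorm (u - w) \<le> vnorm u + vnorm w"
proof -
  have "vnorm (u - w) \<le> L2_set (\<lambda>i. cmod (u $ i) + cmod (w $ i)) {..<dim_vec w}"
    by (rule vnorm_mono) (use assms in \<open>auto intro: norm_triangle_ineq4\<close>)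
  also have "\<dots> \<le> vnorm u + vnorm w"
    unfolding vnorm_L2 using assms by (simp add: L2_set_triangle_ineq)
  finally show ?thesis .
qed

lemma opnorm_add:
  assumes A: "A \<in> carrier_mat n k" and B: "B \<in> carrier_mat n k"
  shows "opnorm (A + B) \<le> opnorm A + opnorm B"
proof (rule opnorm_le)
  show "0 \<le> opnorm A + opnorm B" using opnorm_nonneg[of A] opnorm_nonneg[of B] by simp
  have dA: "dim_row A = n" "dim_col A = k" using A by auto
  have dB: "dim_row B = n" "dim_col B = k" using B by auto
  fix v :: "complex vec" assume v: "dim_vec v = dim_col (A + B)"
  then have vd: "dim_vec v = k" using dB by simp
  then have vc: "v \<in> carrier_vec k" by (rule carrier_vecI)
  have "(A + B) *\<^sub>v v = A *\<^sub>v v + B *\<^sub>v v" by (rule add_mult_distrib_mat_vec[OF A B vc])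
  moreover have "vnorm (A *\<^sub>v v + B *\<^sub>v v) \<le> vnorm (A *\<^sub>v v) + vnorm (B *\<^sub>v v)"
    by (rule vnorm_add) (simp add: dA dB)
  ultimately have "vnorm ((A + B) *\<^sub>v v) \<le> vnorm (A *\<^sub>v v) + vnorm (B *\<^sub>v v)"
    by simp
  also have "\<dots> \<le> opnorm A * vnorm v + opnorm B * vnorm v"
    by (intro add_mono opnorm_bound) (simp_all add: dA dB vd)
  finally show "vnorm ((A + B) *\<^sub>v v) \<le> (opnorm A + opnorm B) * vnorm v"
    by (simp add: algebra_simps)
qed

lemma opnorm_diff:
  assumes A: "A \<in> carrier_mat n k" and B: "B \<in> carrier_mat n k"
  shows "opnorm (A - B) \<le> opnorm A + opnorm B"
proof (rule opnorm_le)
  show "0 \<le> opnorm A + opnorm B" using opnorm_nonneg[of A] opnorm_nonneg[of B] by simp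
  have dA: "dim_row A = n" "dim_col A = k" using A by auto
  have dB: "dim_row B = n" "dim_col B = k" using B by auto
  fix v :: "complex vec" assume v: "dim_vec v = dim_col (A - B)"
  then have vd: "dim_vec v = k" using dB by simp
  then have vc: "v \<in> carrier_vec k" by (rule carrier_vecI)
  have "(A - B) *\<^sub>v v = A *\<^sub>v v - B *\<^sub>v v" by (rule minus_mult_distrib_mat_vec[OF A B vc])
  moreover have "vnorm (A *\<^sub>v v - B *\<^sub>v v) \<le> vnorm (A *\<^sub>v v) + vnorm (B *\<^sub>v v)"
    by (rule vnorm_diff) (simp add: dA dB)
  ultimately have "vnorm ((A - B) *\<^sub>v v) \<le> vnorm (A *\<^sub>v v) + vnorm (B *\<^sub>v v)"
    by simp
  also have "\<dots> \<le> opnorm A * vnorm v + opnorm B * vnorm v"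
    by (intro add_mono opnorm_bound) (simp_all add: dA dB vd)
  finally show "vnorm ((A - B) *\<^sub>v v) \<le> (opnorm A + opnorm B) * vnorm v"
    by (simp add: algebra_simps)
qed

lemma opnorm_mult:
  assumes A: "A \<in> carrier_mat n k" and B: "B \<in> carrier_mat k l"
  shows "opnorm (A * B) \<le> opnorm A * opnorm B"
proof (rule opnorm_le)
  show "0 \<le> opnorm A * opnorm B" using opnorm_nonneg[of A] opnorm_nonneg[of B] by simp
  have dA: "dim_row A = n" "dim_col A = k" using A by auto
  have dB: "dim_row B = k" "dim_col B = l" using B by auto
  fix v :: "complex vec" assume v: "dim_vec v = dim_col (A * B)"
  then have vd: "dim_vec v = l" using dB by simp
  then have vc: "v \<in> carrier_vec l" by (rule carrier_vecI)
  have "(A * B) *\<^sub>v v = A *\<^sub>v (B *\<^sub>v v)" by (rule assoc_mult_mat_vec[OF A B vc])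
  moreover have "vnorm (A *\<^sub>v (B *\<^sub>v v)) \<le> opnorm A * vnorm (B *\<^sub>v v)"
    by (rule opnorm_bound) (simp add: dA dB)
  ultimately have "vnorm ((A * B) *\<^sub>v v) \<le> opnorm A * vnorm (B *\<^sub>v v)" by simp
  also have "\<dots> \<le> opnorm A * (opnorm B * vnorm v)"
    by (intro mult_left_mono opnorm_bound opnorm_nonneg) (simp add: dB vd)
  finally show "vnorm ((A * B) *\<^sub>v v) \<le> (opnorm A * opnorm B) * vnorm v"
    by (simp add: algebra_simps)
qed

lemma smult_mat_vec: "dim_vec v = dim_col A \<Longrightarrow> (c \<cdot>\<^sub>m A) *\<^sub>v v = c \<cdot>\<^sub>v (A *\<^sub>v v)"
  by (intro eq_vecI) (simp_all add: scalar_prod_def sum_distrib_left mult.assoc)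

lemma opnorm_smult: "opnorm (c \<cdot>\<^sub>m A) \<le> cmod c * opnorm A"
proof (rule opnorm_le)
  show "0 \<le> cmod c * opnorm A" using opnorm_nonneg[of A] by simp
  fix v :: "complex vec" assume v: "dim_vec v = dim_col (c \<cdot>\<^sub>m A)"
  then have "vnorm ((c \<cdot>\<^sub>m A) *\<^sub>v v) = cmod c * vnorm (A *\<^sub>v v)"
    by (simp add: smult_mat_vec vnorm_smult)
  also have "\<dots> \<le> cmod c * (opnorm A * vnorm v)"
    using v by (intro mult_left_mono opnorm_bound) auto
  finally show "vnorm ((c \<cdot>\<^sub>m A) *\<^sub>v v) \<le> cmod c * opnorm A * vnorm v"
    by (simp add: algebra_simps)
qed

lemma opnorm_one: "opnorm (1\<^sub>m n) \<le> 1"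
proof (rule opnorm_le)
  fix v :: "complex vec" assume v: "dim_vec v = dim_col (1\<^sub>m n :: complex mat)"
  then have "1\<^sub>m n *\<^sub>v v = v" by (intro one_mult_mat_vec carrier_vecI) simp
  then show "vnorm (1\<^sub>m n *\<^sub>v v) \<le> 1 * vnorm v" by simp
qed simp

lemma quad_form_bound:
  assumes C: "C \<in> carrier_mat n n" and u: "dim_vec u = n" and u1: "vnorm u = 1"
  shows "cmod (\<Sum>i<n. cnj (u $ i) * (C *\<^sub>v u) $ i) \<le> opnorm C"
proof -
  let ?cu = "vec n (\<lambda>i. cnj (u $ i))"
  have "vnorm ?cu = vnorm u" unfolding vnorm_def using u by simp
  have "cmod (\<Sum>i<n. cnj (u $ i) * (C *\<^sub>v u) $ i) = cmod (\<Sum>i<n. ?cu $ i * (C *\<^sub>v u) $ i)"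
    by simp
  also have "\<dots> \<le> vnorm ?cu * vnorm (C *\<^sub>v u)"
    by (rule cauchy_schwarz_vec) (use C in simp_all)
  also have "\<dots> = vnorm (C *\<^sub>v u)" using \<open>vnorm ?cu = vnorm u\<close> u1 by simp
  also have "\<dots> \<le> opnorm C * vnorm u" using C u by (intro opnorm_bound) simp
  finally show ?thesis using u1 by simp
qed

lemma weighted_cs:
  fixes a x :: "nat \<Rightarrow> real"
  assumes "\<And>j. 0 \<le> a j"
  shows "(\<Sum>j<n. a j * x j)\<^sup>2 \<le> (\<Sum>j<n. a j) * (\<Sum>j<n. a j * (x j)\<^sup>2)"
proof -
  have "(\<Sum>j<n. a j * x j) = (\<Sum>j<n. sqrt (a j) * (sqrt (a j) * x j))"
    using assms by (intro sum.cong) (auto simp: mult.assoc[symmetric])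
  also have "(\<dots>)\<^sup>2 \<le> (\<Sum>j<n. (sqrt (a j))\<^sup>2) * (\<Sum>j<n. (sqrt (a j) * x j)\<^sup>2)"
    by (rule Cauchy_Schwarz_ineq_sum)
  also have "\<dots> = (\<Sum>j<n. a j) * (\<Sum>j<n. a j * (x j)\<^sup>2)"
    using assms by (simp add: power_mult_distrib)
  finally show ?thesis .
qed

lemma opnorm_schur_test:
  assumes A: "A \<in> carrier_mat n n" and R: "0 \<le> R"
    and rows: "\<And>i. i < n \<Longrightarrow> (\<Sum>j<n. cmod (A $$ (i, j))) \<le> R"
    and cols: "\<And>j. j < n \<Longrightarrow> (\<Sum>i<n. cmod (A $$ (i, j))) \<le> R"
  shows "opnorm A \<le> R"
proof (rule opnorm_le[OF R])
  have dA: "dim_row A = n" "dim_col A = n" using A by auto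
  fix v :: "complex vec" assume "dim_vec v = dim_col A"
  then have vd: "dim_vec v = n" using dA by simp
  define a where "a i j = cmod (A $$ (i, j))" for i j
  define x where "x j = cmod (v $ j)" for j
  define s where "s i = (\<Sum>j<n. a i j * x j)" for i
  have a0: "0 \<le> a i j" for i j unfolding a_def by simp
  have "vnorm (A *\<^sub>v v) \<le> L2_set s {..<n}"
  proof (rule vnorm_mono)
    show "dim_vec (A *\<^sub>v v) = n" using dA by simp
    fix i assume i: "i < n"
    have "(A *\<^sub>v v) $ i = (\<Sum>j<n. A $$ (i, j) * v $ j)"
      using mult_mat_vec_entry[of i A v] i dA vd by simp
    also have "cmod \<dots> \<le> s i"
      unfolding s_def a_def x_def by (rule order_trans[OF norm_sum]) (simp add: norm_mult)
    finally show "cmod ((A *\<^sub>v v) $ i) \<le> s i" .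
  qed
  also have "L2_set s {..<n} \<le> R * vnorm v"
  proof -
    have "(\<Sum>i<n. (s i)\<^sup>2) \<le> (\<Sum>i<n. R * (\<Sum>j<n. a i j * (x j)\<^sup>2))"
    proof (rule sum_mono)
      fix i assume i: "i \<in> {..<n}"
      have "(s i)\<^sup>2 \<le> (\<Sum>j<n. a i j) * (\<Sum>j<n. a i j * (x j)\<^sup>2)"
        unfolding s_def by (rule weighted_cs) (rule a0)
      also have "\<dots> \<le> R * (\<Sum>j<n. a i j * (x j)\<^sup>2)"
        using rows[of i] i a0 by (intro mult_right_mono sum_nonneg) (auto simp: a_def)
      finally show "(s i)\<^sup>2 \<le> R * (\<Sum>j<n. a i j * (x j)\<^sup>2)" .
    qed
    also have "\<dots> = R * (\<Sum>i<n. \<Sum>j<n. a i j * (x j)\<^sup>2)"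
      by (simp add: sum_distrib_left)
    also have "\<dots> = R * (\<Sum>j<n. \<Sum>i<n. a i j * (x j)\<^sup>2)"
      by (subst sum.swap) (rule refl)
    also have "\<dots> = R * (\<Sum>j<n. (\<Sum>i<n. a i j) * (x j)\<^sup>2)"
      by (simp add: sum_distrib_right)
    also have "\<dots> \<le> R * (\<Sum>j<n. R * (x j)\<^sup>2)"
      using cols R by (intro mult_left_mono sum_mono mult_right_mono) (auto simp: a_def)
    also have "\<dots> = R * (R * (\<Sum>j<n. (x j)\<^sup>2))"
      by (simp only: sum_distrib_left)
    also have "(\<Sum>j<n. (x j)\<^sup>2) = (vnorm v)\<^sup>2"
      unfolding vnorm_def x_def using vd by (simp add: sum_nonneg)
    also have "R * (R * (vnorm v)\<^sup>2) = (R * vnorm v)\<^sup>2"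
      by (simp add: power2_eq_square)
    finally have "(\<Sum>i<n. (s i)\<^sup>2) \<le> (R * vnorm v)\<^sup>2" .
    then have "sqrt (\<Sum>i<n. (s i)\<^sup>2) \<le> sqrt ((R * vnorm v)\<^sup>2)" by (rule real_sqrt_le_mono)
    then show ?thesis using R vnorm_nonneg[of v] by (simp add: L2_set_def)
  qed
  finally show "vnorm (A *\<^sub>v v) \<le> R * vnorm v" .
qed

section \<open>Adjoint and unitary matrices\<close>

definition adj :: "complex mat \<Rightarrow> complex mat" where
  "adj A = mat (dim_col A) (dim_row A) (\<lambda>(i, j). cnj (A $$ (j, i)))"

lemma adj_carrier[simp]: "A \<in> carrier_mat n k \<Longrightarrow> adj A \<in> carrier_mat k n"
  unfolding adj_def by auto

lemma adj_dims[simp]: "dim_row (adj A) = dim_col A" "dim_col (adj A) = dim_row A"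
  unfolding adj_def by auto

lemma adj_index[simp]: "i < dim_col A \<Longrightarrow> j < dim_row A \<Longrightarrow> adj A $$ (i, j) = cnj (A $$ (j, i))"
  unfolding adj_def by auto

lemma mult_entry:
  assumes "A \<in> carrier_mat n k" "B \<in> carrier_mat k l" "i < n" "j < l"
  shows "(A * B) $$ (i, j) = (\<Sum>t<k. A $$ (i, t) * B $$ (t, j))"
  using assms by (auto simp: scalar_prod_def atLeast0LessThan intro!: sum.cong)

lemma cscalar_self:
  fixes w :: "complex vec"
  shows "w \<bullet>c w = complex_of_real ((vnorm w)\<^sup>2)"
proof -
  have "w \<bullet>c w = (\<Sum>i<dim_vec w. w $ i * cnj (w $ i))"
    by (simp add: scalar_prod_def atLeast0LessThan)
  also have "\<dots> = (\<Sum>i<dim_vec w. complex_of_real ((cmod (w $ i))\<^sup>2))"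
    by (intro sum.cong refl) (rule complex_norm_square[symmetric])
  also have "\<dots> = complex_of_real ((vnorm w)\<^sup>2)"
    unfolding vnorm_def by (simp add: sum_nonneg)
  finally show ?thesis .
qed

lemma onb_exists:
  fixes u :: "complex vec"
  assumes u: "u \<in> carrier_vec n" and u1: "vnorm u = 1"
  shows "\<exists>W. W \<in> carrier_mat n n \<and> adj W * W = 1\<^sub>m n \<and> (\<forall>i<n. W $$ (i, 0) = u $ i)"
proof -
  have u0: "u \<noteq> 0\<^sub>v n" using u1 by auto
  interpret cof_vec_space n "TYPE(complex)" .
  from basis_completion[OF u u0]
  have span_b: "set (basis_completion u) \<subseteq> carrier_vec n" and dist_b: "distinct (basis_completion u)"
    and indep: "\<not> lin_dep (set (basis_completion u))"
    and len_b: "length (basis_completion u) = n" and hdb: "hd (basis_completion u) = u" by auto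
  have "n \<noteq> 0" using u u0 by auto
  with hdb len_b obtain vs where bv: "basis_completion u = u # vs" by (cases "basis_completion u") auto
  define ws where "ws = gram_schmidt n (u # vs)"
  from gram_schmidt_result[OF span_b dist_b indep, unfolded bv, OF ws_def]
  have ws: "corthogonal ws" "set ws \<subseteq> carrier_vec n" "length ws = n"
    using len_b bv by auto
  have hdws: "hd ws = u" unfolding ws_def using u by simp
  then have ws0: "ws ! 0 = u" using \<open>n \<noteq> 0\<close> ws(3) by (cases ws) auto
  have wsc: "j < n \<Longrightarrow> ws ! j \<in> carrier_vec n" for j using ws by auto
  have nz: "vnorm (ws ! j) \<noteq> 0" if j: "j < n" for j
  proof
    assume "vnorm (ws ! j) = 0"
    then have "ws ! j \<bullet>c ws ! j = 0" by (simp add: cscalar_self)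
    moreover have "ws ! j \<bullet>c ws ! j \<noteq> 0" using corthogonalD[OF ws(1)] j ws(3) by auto
    ultimately show False by simp
  qed
  define W where "W = mat n n (\<lambda>(i, j). (ws ! j) $ i / complex_of_real (vnorm (ws ! j)))"
  have W: "W \<in> carrier_mat n n" unfolding W_def by simp
  have "adj W * W = 1\<^sub>m n"
  proof (rule eq_matI)
    fix j k assume j: "j < dim_row (1\<^sub>m n :: complex mat)" and k: "k < dim_col (1\<^sub>m n :: complex mat)"
    then have j: "j < n" and k: "k < n" by auto
    have "(adj W * W) $$ (j, k) = (\<Sum>i<n. cnj (W $$ (i, j)) * W $$ (i, k))"
      using W j k by (subst mult_entry[of _ n n _ n]) auto
    also have "\<dots> = (ws ! k \<bullet>c ws ! j) / (complex_of_real (vnorm (ws ! j)) * complex_of_real (vnorm (ws ! k)))"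
      using j k wsc[OF j] wsc[OF k]
      by (simp add: W_def scalar_prod_def atLeast0LessThan sum_divide_distrib mult.commute)
    also have "\<dots> = 1\<^sub>m n $$ (j, k)"
    proof (cases "j = k")
      case True
      then show ?thesis using j nz[OF j] by (simp add: cscalar_self power2_eq_square)
    next
      case False
      then have "ws ! k \<bullet>c ws ! j = 0" using corthogonalD[OF ws(1)] j k ws(3) by auto
      then show ?thesis using False j k by simp
    qed
    finally show "(adj W * W) $$ (j, k) = 1\<^sub>m n $$ (j, k)" .
  qed (use W in auto)
  moreover have "\<forall>i<n. W $$ (i, 0) = u $ i"
    using \<open>n \<noteq> 0\<close> u1 ws0 by (simp add: W_def)
  ultimately show ?thesis using W by blast
qed

lemma adj_adj[simp]: "adj (adj A) = A"
  by (rule eq_matI) (auto simp: adj_def)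

lemma adj_mult:
  assumes A: "A \<in> carrier_mat n k" and B: "B \<in> carrier_mat k l"
  shows "adj (A * B) = adj B * adj A"
proof (rule eq_matI)
  fix i j assume i: "i < dim_row (adj B * adj A)" and j: "j < dim_col (adj B * adj A)"
  then have i: "i < l" and j: "j < n" using A B by auto
  have "adj (A * B) $$ (i, j) = cnj ((A * B) $$ (j, i))" using A B i j by simp
  also have "\<dots> = cnj (\<Sum>t<k. A $$ (j, t) * B $$ (t, i))" by (simp add: mult_entry[OF A B j i])
  also have "\<dots> = (\<Sum>t<k. adj B $$ (i, t) * adj A $$ (t, j))"
    using A B i j by (simp add: mult.commute)
  also have "\<dots> = (adj B * adj A) $$ (i, j)"
    by (rule mult_entry[symmetric, of _ l k _ n]) (use A B i j in auto)
  finally show "adj (A * B) $$ (i, j) = (adj B * adj A) $$ (i, j)" .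
qed (use A B in auto)

lemma selfadjoint_adj: "selfadjoint n A \<longleftrightarrow> A \<in> carrier_mat n n \<and> adj A = A"
proof
  assume h: "selfadjoint n A"
  then have A: "A \<in> carrier_mat n n" and hA: "\<And>i j. i < n \<Longrightarrow> j < n \<Longrightarrow> A $$ (i, j) = cnj (A $$ (j, i))"
    unfolding selfadjoint_def by blast+
  have dA: "dim_row A = n" "dim_col A = n" using A by auto
  have "adj A = A"
  proof (rule eq_matI)
    fix i j assume "i < dim_row A" "j < dim_col A"
    then have i: "i < n" and j: "j < n" using dA by auto
    show "adj A $$ (i, j) = A $$ (i, j)" using hA[OF i j] i j dA by simp
  qed (simp_all add: dA)
  then show "A \<in> carrier_mat n n \<and> adj A = A" using A by simp
next
  assume h: "A \<in> carrier_mat n n \<and> adj A = A"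
  then have dA: "dim_row A = n" "dim_col A = n" by auto
  have "A $$ (i, j) = cnj (A $$ (j, i))" if i: "i < n" and j: "j < n" for i j
  proof -
    have "A $$ (i, j) = adj A $$ (i, j)" using h by simp
    also have "\<dots> = cnj (A $$ (j, i))" using i j dA by simp
    finally show ?thesis .
  qed
  then show "selfadjoint n A" using h unfolding selfadjoint_def by blast
qed

definition unitary :: "nat \<Rightarrow> complex mat \<Rightarrow> bool" where
  "unitary n U \<longleftrightarrow> U \<in> carrier_mat n n \<and> adj U * U = 1\<^sub>m n \<and> U * adj U = 1\<^sub>m n"

lemma unitaryI:
  assumes U: "U \<in> carrier_mat n n" and h: "adj U * U = 1\<^sub>m n"
  shows "unitary n U"
  unfolding unitary_def using U h mat_mult_left_right_inverse[OF adj_carrier[OF U] U h] by simp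

lemma unitary_adj: "unitary n U \<Longrightarrow> unitary n (adj U)"
  unfolding unitary_def by auto

lemma unitary_mult:
  assumes U: "unitary n U" and V: "unitary n V"
  shows "unitary n (U * V)"
proof (rule unitaryI)
  have Uc: "U \<in> carrier_mat n n" and Vc: "V \<in> carrier_mat n n" using U V unfolding unitary_def by auto
  show "U * V \<in> carrier_mat n n" using Uc Vc by simp
  have "adj (U * V) * (U * V) = adj V * adj U * (U * V)" by (simp add: adj_mult[OF Uc Vc])
  also have "\<dots> = adj V * ((adj U * U) * V)"
    using Uc Vc by (simp add: assoc_mult_mat[of _ n n _ n _ n])
  also have "\<dots> = 1\<^sub>m n" using U V Vc unfolding unitary_def by simp
  finally show "adj (U * V) * (U * V) = 1\<^sub>m n" .
qed

definition dmat :: "nat \<Rightarrow> (nat \<Rightarrow> real) \<Rightarrow> complex mat" where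
  "dmat n lam = mat n n (\<lambda>(i, j). if i = j then complex_of_real (lam i) else 0)"

lemma dmat_carrier[simp]: "dmat n lam \<in> carrier_mat n n"
  unfolding dmat_def by simp

lemma udu_entry:
  assumes U: "U \<in> carrier_mat n n" and i: "i < n" and j: "j < n"
  shows "(U * dmat n lam * adj U) $$ (i, j) = (\<Sum>k<n. U $$ (i, k) * complex_of_real (lam k) * cnj (U $$ (j, k)))"
proof -
  have ud: "(U * dmat n lam) $$ (i, k) = U $$ (i, k) * complex_of_real (lam k)" if k: "k < n" for k
  proof -
    have "(U * dmat n lam) $$ (i, k) = (\<Sum>t<n. U $$ (i, t) * dmat n lam $$ (t, k))"
      by (rule mult_entry[OF U dmat_carrier i k])
    also have "\<dots> = (\<Sum>t<n. if t = k then U $$ (i, t) * complex_of_real (lam k) else 0)"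
      using k by (intro sum.cong refl) (auto simp: dmat_def)
    also have "\<dots> = U $$ (i, k) * complex_of_real (lam k)" using k by simp
    finally show ?thesis .
  qed
  have "(U * dmat n lam * adj U) $$ (i, j) = (\<Sum>k<n. (U * dmat n lam) $$ (i, k) * adj U $$ (k, j))"
    by (rule mult_entry[of _ n n _ n]) (use U i j in auto)
  also have "\<dots> = (\<Sum>k<n. U $$ (i, k) * complex_of_real (lam k) * cnj (U $$ (j, k)))"
    using U j by (intro sum.cong refl) (simp add: ud)
  finally show ?thesis .
qed

lemma selfadjoint_conj:
  assumes A: "selfadjoint n A" and W: "W \<in> carrier_mat n k"
  shows "selfadjoint k (adj W * A * W)"
proof -
  have Ac: "A \<in> carrier_mat n n" and aA: "adj A = A" using A by (auto simp: selfadjoint_adj)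
  have c1: "adj W * A \<in> carrier_mat k n" using mult_carrier_mat[OF adj_carrier[OF W] Ac] .
  have "adj (adj W * A * W) = adj W * adj (adj W * A)" by (rule adj_mult[OF c1 W])
  also have "adj (adj W * A) = adj A * adj (adj W)" by (rule adj_mult[OF adj_carrier[OF W] Ac])
  also have "adj W * (adj A * adj (adj W)) = adj W * A * W"
    using Ac W aA by (simp add: assoc_mult_mat[of _ k n _ n _ k])
  finally show ?thesis unfolding selfadjoint_adj using c1 W by simp
qed

lemma assoc5:
  fixes A B C D E :: "complex mat"
  assumes A: "A \<in> carrier_mat n n" and B: "B \<in> carrier_mat n n" and C: "C \<in> carrier_mat n n"
    and D: "D \<in> carrier_mat n n" and E: "E \<in> carrier_mat n n"
  shows "A * (B * C * D) * E = (A * B) * C * (D * E)"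
proof -
  have BC: "B * C \<in> carrier_mat n n" using B C by simp
  have AB: "A * B \<in> carrier_mat n n" using A B by simp
  have ABC: "A * B * C \<in> carrier_mat n n" using AB C by simp
  have e1: "(A * B) * C * (D * E) = ((A * B) * C * D) * E"
    using assoc_mult_mat[OF ABC D E] by simp
  have e2: "(A * B) * C = A * (B * C)" by (rule assoc_mult_mat[OF A B C])
  have e3: "A * (B * C) * D = A * (B * C * D)" by (rule assoc_mult_mat[OF A BC D])
  show ?thesis by (subst e1, subst e2, subst e3) (rule refl)
qed

lemma unitary_0: "unitary 0 (1\<^sub>m 0)"
  by (rule unitaryI) (auto intro!: eq_matI)

lemma spectral:
  assumes "selfadjoint n A"
  shows "\<exists>U lam. unitary n U \<and> A = U * dmat n lam * adj U"
  using assms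
proof (induction n arbitrary: A)
  case 0
  then have A: "A \<in> carrier_mat 0 0" by (simp add: selfadjoint_def)
  have "A = 1\<^sub>m 0 * dmat 0 (\<lambda>_. 0) * adj (1\<^sub>m 0)"
    by (rule eq_matI) (use A in auto)
  then show ?case using unitary_0 by blast
next
  case (Suc m A)
  define n where "n = Suc m"
  have sa: "selfadjoint n A" using Suc.prems by (simp add: n_def)
  have A: "A \<in> carrier_mat n n" and aA: "adj A = A" using sa by (auto simp: selfadjoint_adj)
  have n0: "0 < n" by (simp add: n_def)
  obtain e where "e \<in> spectrum A" using spectrum_non_empty[OF A n0] by blast
  then have ev: "eigenvalue A e" by (simp add: spectrum_def)
  define v where "v = find_eigenvector A e"
  have "eigenvector A v e" unfolding v_def by (rule find_eigenvector[OF A ev])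
  then have vc: "v \<in> carrier_vec n" and v0: "v \<noteq> 0\<^sub>v n" and Av: "A *\<^sub>v v = e \<cdot>\<^sub>v v"
    using A by (auto simp: eigenvector_def)
  have vnz: "vnorm v \<noteq> 0"
  proof
    assume "vnorm v = 0"
    then have "\<forall>i<dim_vec v. v $ i = 0" by (simp add: vnorm_zero_iff)
    then have "v = 0\<^sub>v n" using vc by (intro eq_vecI) auto
    with v0 show False by simp
  qed
  have vpos: "vnorm v > 0" using vnz vnorm_nonneg[of v] by linarith
  define u where "u = complex_of_real (1 / vnorm v) \<cdot>\<^sub>v v"
  have uc: "u \<in> carrier_vec n" unfolding u_def using vc by simp
  have u1: "vnorm u = 1" unfolding u_def vnorm_smult using vpos by (simp add: norm_divide)
  have Au: "A *\<^sub>v u = e \<cdot>\<^sub>v u"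
  proof -
    have "A *\<^sub>v u = complex_of_real (1 / vnorm v) \<cdot>\<^sub>v (A *\<^sub>v v)"
      unfolding u_def by (rule mult_mat_vec[OF A vc])
    also have "\<dots> = e \<cdot>\<^sub>v u" unfolding Av u_def
      by (intro eq_vecI) (simp_all add: mult_ac)
    finally show ?thesis .
  qed
  obtain W where W: "W \<in> carrier_mat n n" and WW1: "adj W * W = 1\<^sub>m n"
    and W0: "\<And>i. i < n \<Longrightarrow> W $$ (i, 0) = u $ i"
    using onb_exists[OF uc u1] by blast
  have uW: "unitary n W" by (rule unitaryI[OF W WW1])
  then have WW2: "W * adj W = 1\<^sub>m n" unfolding unitary_def by simp
  define A' where "A' = adj W * A * W"
  have A'c: "A' \<in> carrier_mat n n" unfolding A'_def
    using mult_carrier_mat[OF mult_carrier_mat[OF adj_carrier[OF W] A] W] .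
  have sa': "selfadjoint n A'" unfolding A'_def by (rule selfadjoint_conj[OF sa W])
  then have hA': "\<And>i j. i < n \<Longrightarrow> j < n \<Longrightarrow> A' $$ (i, j) = cnj (A' $$ (j, i))"
    unfolding selfadjoint_def by blast
  have dA: "dim_row A = n" "dim_col A = n" using A by auto
  have AW: "(A * W) $$ (k, 0) = e * W $$ (k, 0)" if k: "k < n" for k
  proof -
    have "(A * W) $$ (k, 0) = (\<Sum>t<n. A $$ (k, t) * W $$ (t, 0))"
      by (rule mult_entry[OF A W k n0])
    also have "\<dots> = (\<Sum>t<n. A $$ (k, t) * u $ t)"
      by (intro sum.cong refl) (simp add: W0)
    also have "\<dots> = (A *\<^sub>v u) $ k"
      using dA uc k by (subst mult_mat_vec_entry) simp_all
    also have "\<dots> = e * u $ k" using Au k uc by simp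
    finally show ?thesis using W0[OF k] by simp
  qed
  have col0: "A' $$ (i, 0) = (if i = 0 then e else 0)" if i: "i < n" for i
  proof -
    have "A' = adj W * (A * W)" unfolding A'_def using A W by (simp add: assoc_mult_mat[of _ n n _ n _ n])
    then have "A' $$ (i, 0) = (adj W * (A * W)) $$ (i, 0)" by simp
    also have "\<dots> = (\<Sum>k<n. adj W $$ (i, k) * (A * W) $$ (k, 0))"
      by (rule mult_entry[OF adj_carrier[OF W] mult_carrier_mat[OF A W] i n0])
    also have "\<dots> = (\<Sum>k<n. e * (adj W $$ (i, k) * W $$ (k, 0)))"
      by (intro sum.cong refl) (simp add: AW)
    also have "\<dots> = e * (\<Sum>k<n. adj W $$ (i, k) * W $$ (k, 0))"
      by (simp add: sum_distrib_left)
    also have "\<dots> = e * (adj W * W) $$ (i, 0)"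
      by (subst mult_entry[OF adj_carrier[OF W] W i n0]) (rule refl)
    also have "\<dots> = (if i = 0 then e else 0)" using WW1 i n0 by simp
    finally show ?thesis .
  qed
  have c00: "A' $$ (0, 0) = e" using col0[OF n0] by simp
  have "e = cnj e" using hA'[OF n0 n0] by (simp only: c00)
  then have e_real: "cnj e = e" by simp
  then have "Im e = 0" by (simp add: complex_eq_iff)
  then have e_re: "complex_of_real (Re e) = e" by (simp add: complex_eq_iff)
  have row0: "A' $$ (0, j) = (if j = 0 then e else 0)" if j: "j < n" for j
  proof -
    have "A' $$ (0, j) = cnj (A' $$ (j, 0))" by (rule hA'[OF n0 j])
    also have "\<dots> = cnj (if j = 0 then e else 0)" by (simp only: col0[OF j])
    also have "\<dots> = (if j = 0 then e else 0)" using e_real by simp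
    finally show ?thesis .
  qed
  define A3 where "A3 = mat m m (\<lambda>(i, j). A' $$ (Suc i, Suc j))"
  have sa3: "selfadjoint m A3"
    unfolding selfadjoint_def
  proof (intro conjI allI impI)
    show "A3 \<in> carrier_mat m m" unfolding A3_def by simp
    fix i j assume i: "i < m" and j: "j < m"
    have "A3 $$ (i, j) = A' $$ (Suc i, Suc j)" using i j by (simp add: A3_def)
    also have "\<dots> = cnj (A' $$ (Suc j, Suc i))" by (rule hA') (use i j in \<open>simp_all add: n_def\<close>)
    also have "A' $$ (Suc j, Suc i) = A3 $$ (j, i)" using i j by (simp add: A3_def)
    finally show "A3 $$ (i, j) = cnj (A3 $$ (j, i))" .
  qed
  obtain U' lam' where uU': "unitary m U'" and A3d: "A3 = U' * dmat m lam' * adj U'"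
    using Suc.IH[OF sa3] by blast
  have U'c: "U' \<in> carrier_mat m m" and U'U: "adj U' * U' = 1\<^sub>m m" using uU' unfolding unitary_def by auto
  define U1 where "U1 = mat n n (\<lambda>(i, j). if i = 0 \<and> j = 0 then 1 else if i = 0 \<or> j = 0 then 0 else U' $$ (i - 1, j - 1))"
  define lam where "lam = (\<lambda>i. if i = 0 then Re e else lam' (i - 1))"
  have U1c: "U1 \<in> carrier_mat n n" unfolding U1_def by simp
  have uU1: "unitary n U1"
  proof (rule unitaryI[OF U1c], rule eq_matI)
    fix i j assume "i < dim_row (1\<^sub>m n :: complex mat)" "j < dim_col (1\<^sub>m n :: complex mat)"
    then have i: "i < n" and j: "j < n" by auto
    have "(adj U1 * U1) $$ (i, j) = (\<Sum>k<n. cnj (U1 $$ (k, i)) * U1 $$ (k, j))"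
      using U1c i j by (subst mult_entry[OF adj_carrier[OF U1c] U1c i j]) (intro sum.cong refl; simp)
    also have "\<dots> = cnj (U1 $$ (0, i)) * U1 $$ (0, j) + (\<Sum>k<m. cnj (U1 $$ (Suc k, i)) * U1 $$ (Suc k, j))"
      unfolding n_def by (rule sum.lessThan_Suc_shift)
    also have "\<dots> = 1\<^sub>m n $$ (i, j)"
    proof (cases "i = 0 \<or> j = 0")
      case True
      then show ?thesis using i j by (auto simp: U1_def n_def)
    next
      case False
      then obtain i' j' where ii: "i = Suc i'" and jj: "j = Suc j'" by (metis not0_implies_Suc)
      then have i': "i' < m" and j': "j' < m" using i j by (auto simp: n_def)
      have "(\<Sum>k<m. cnj (U1 $$ (Suc k, i)) * U1 $$ (Suc k, j)) = (\<Sum>k<m. cnj (U' $$ (k, i')) * U' $$ (k, j'))"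
        using i j ii jj by (intro sum.cong refl) (auto simp: U1_def n_def)
      also have "\<dots> = (adj U' * U') $$ (i', j')"
        using U'c i' j' by (subst mult_entry[OF adj_carrier[OF U'c] U'c i' j']) (intro sum.cong refl; simp)
      also have "\<dots> = 1\<^sub>m m $$ (i', j')" using U'U by simp
      finally show ?thesis using i j ii jj i' j' by (simp add: U1_def n_def)
    qed
    finally show "(adj U1 * U1) $$ (i, j) = 1\<^sub>m n $$ (i, j)" .
  qed (auto simp: U1_def)
  have A'd: "A' = U1 * dmat n lam * adj U1"
  proof (rule eq_matI)
    fix i j assume "i < dim_row (U1 * dmat n lam * adj U1)" "j < dim_col (U1 * dmat n lam * adj U1)"
    then have i: "i < n" and j: "j < n" using U1c by auto
    have "(U1 * dmat n lam * adj U1) $$ (i, j) = (\<Sum>k<n. U1 $$ (i, k) * complex_of_real (lam k) * cnj (U1 $$ (j, k)))"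
      by (rule udu_entry[OF U1c i j])
    also have "\<dots> = U1 $$ (i, 0) * complex_of_real (lam 0) * cnj (U1 $$ (j, 0))
        + (\<Sum>k<m. U1 $$ (i, Suc k) * complex_of_real (lam (Suc k)) * cnj (U1 $$ (j, Suc k)))"
      unfolding n_def by (rule sum.lessThan_Suc_shift)
    also have "\<dots> = A' $$ (i, j)"
    proof (cases "i = 0 \<or> j = 0")
      case True
      then show ?thesis using i j row0 col0 e_re by (auto simp: U1_def lam_def n_def)
    next
      case False
      then obtain i' j' where ii: "i = Suc i'" and jj: "j = Suc j'" by (metis not0_implies_Suc)
      then have i': "i' < m" and j': "j' < m" using i j by (auto simp: n_def)
      have "(\<Sum>k<m. U1 $$ (i, Suc k) * complex_of_real (lam (Suc k)) * cnj (U1 $$ (j, Suc k)))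
          = (\<Sum>k<m. U' $$ (i', k) * complex_of_real (lam' k) * cnj (U' $$ (j', k)))"
        using i j ii jj by (intro sum.cong refl) (auto simp: U1_def lam_def n_def)
      also have "\<dots> = A3 $$ (i', j')" unfolding A3d by (rule udu_entry[OF U'c i' j', symmetric])
      also have "\<dots> = A' $$ (i, j)" using ii jj i' j' by (simp add: A3_def)
      finally show ?thesis using i j ii jj by (simp add: U1_def n_def)
    qed
    finally show "A' $$ (i, j) = (U1 * dmat n lam * adj U1) $$ (i, j)" by simp
  qed (use U1c A'c in auto)
  define U where "U = W * U1"
  have uU: "unitary n U" unfolding U_def by (rule unitary_mult[OF uW uU1])
  have "A = W * A' * adj W"
  proof -
    have "W * A' * adj W = (W * adj W) * A * (W * adj W)"
      unfolding A'_def by (rule assoc5[OF W adj_carrier[OF W] A W adj_carrier[OF W]])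
    also have "\<dots> = A" using WW2 A by simp
    finally show ?thesis by simp
  qed
  also have "\<dots> = U * dmat n lam * adj U"
    unfolding A'd U_def adj_mult[OF W U1c] by (rule assoc5[OF W U1c dmat_carrier adj_carrier[OF U1c] adj_carrier[OF W]])
  finally show ?case using uU unfolding n_def by blast
qed

lemma dmat_mult: "dmat n a * dmat n b = dmat n (\<lambda>i. a i * b i)"
proof (rule eq_matI)
  fix i j assume "i < dim_row (dmat n (\<lambda>i. a i * b i))" "j < dim_col (dmat n (\<lambda>i. a i * b i))"
  then have i: "i < n" and j: "j < n" by (auto simp: dmat_def)
  have "(dmat n a * dmat n b) $$ (i, j) = (\<Sum>t<n. dmat n a $$ (i, t) * dmat n b $$ (t, j))"
    by (rule mult_entry[OF dmat_carrier dmat_carrier i j])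
  also have "\<dots> = (\<Sum>t<n. if t = i then (if i = j then complex_of_real (a i * b i) else 0) else 0)"
    using i j by (intro sum.cong refl) (auto simp: dmat_def)
  also have "\<dots> = dmat n (\<lambda>i. a i * b i) $$ (i, j)" using i j by (simp add: dmat_def)
  finally show "(dmat n a * dmat n b) $$ (i, j) = dmat n (\<lambda>i. a i * b i) $$ (i, j)" .
qed (auto simp: dmat_def)

lemma dmat_one: "dmat n (\<lambda>_. 1) = 1\<^sub>m n"
  by (rule eq_matI) (auto simp: dmat_def)

lemma assoc6:
  fixes A B C D E F :: "complex mat"
  assumes A: "A \<in> carrier_mat n n" and B: "B \<in> carrier_mat n n" and C: "C \<in> carrier_mat n n"
    and D: "D \<in> carrier_mat n n" and E: "E \<in> carrier_mat n n" and F: "F \<in> carrier_mat n n"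
  shows "(A * B * C) * (D * E * F) = A * (B * (C * D) * E) * F"
proof -
  have AB: "A * B \<in> carrier_mat n n" using A B by simp
  have ABC: "A * B * C \<in> carrier_mat n n" using AB C by simp
  have DE: "D * E \<in> carrier_mat n n" using D E by simp
  have CD: "C * D \<in> carrier_mat n n" using C D by simp
  have CDE: "C * D * E \<in> carrier_mat n n" using CD E by simp
  have BCD: "B * (C * D) \<in> carrier_mat n n" using B CD by simp
  have e1: "(A * B * C) * (D * E * F) = ((A * B * C) * (D * E)) * F"
    using assoc_mult_mat[OF ABC DE F] by simp
  have e2: "(A * B * C) * (D * E) = (A * B) * (C * (D * E))" by (rule assoc_mult_mat[OF AB C DE])
  have e3: "C * (D * E) = C * D * E" using assoc_mult_mat[OF C D E] by simp
  have e4: "(A * B) * (C * D * E) = A * (B * (C * D * E))" by (rule assoc_mult_mat[OF A B CDE])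
  have e5: "B * (C * D * E) = B * (C * D) * E" using assoc_mult_mat[OF B CD E] by simp
  show ?thesis by (subst e1, subst e2, subst e3, subst e4, subst e5) (rule refl)
qed

lemma pow_udu:
  assumes U: "unitary n U"
  shows "(U * dmat n lam * adj U) ^\<^sub>m k = U * dmat n (\<lambda>i. lam i ^ k) * adj U"
proof (induction k)
  case 0
  have Uc: "U \<in> carrier_mat n n" and UU: "U * adj U = 1\<^sub>m n" using U unfolding unitary_def by auto
  have "U * dmat n (\<lambda>i. lam i ^ 0) * adj U = U * adj U"
    using Uc by (simp add: dmat_one)
  then show ?case using Uc UU by simp
next
  case (Suc k)
  have Uc: "U \<in> carrier_mat n n" and UU: "adj U * U = 1\<^sub>m n" using U unfolding unitary_def by auto
  have "(U * dmat n lam * adj U) ^\<^sub>m Suc k = (U * dmat n (\<lambda>i. lam i ^ k) * adj U) * (U * dmat n lam * adj U)"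
    using Suc by simp
  also have "\<dots> = U * (dmat n (\<lambda>i. lam i ^ k) * (adj U * U) * dmat n lam) * adj U"
    by (rule assoc6[OF Uc dmat_carrier adj_carrier[OF Uc] Uc dmat_carrier adj_carrier[OF Uc]])
  also have "dmat n (\<lambda>i. lam i ^ k) * (adj U * U) * dmat n lam = dmat n (\<lambda>i. lam i ^ Suc k)"
    unfolding UU right_mult_one_mat[OF dmat_carrier] dmat_mult by (simp add: mult.commute)
  finally show ?case .
qed

lemma udu_diag:
  assumes U: "U \<in> carrier_mat n n" and i: "i < n"
  shows "(U * dmat n lam * adj U) $$ (i, i) = complex_of_real (\<Sum>k<n. (cmod (U $$ (i, k)))\<^sup>2 * lam k)"
proof -
  have "(U * dmat n lam * adj U) $$ (i, i) = (\<Sum>k<n. U $$ (i, k) * complex_of_real (lam k) * cnj (U $$ (i, k)))"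
    by (rule udu_entry[OF U i i])
  also have "\<dots> = (\<Sum>k<n. complex_of_real ((cmod (U $$ (i, k)))\<^sup>2 * lam k))"
  proof (intro sum.cong refl)
    fix k
    have "U $$ (i, k) * complex_of_real (lam k) * cnj (U $$ (i, k)) = (U $$ (i, k) * cnj (U $$ (i, k))) * complex_of_real (lam k)"
      by (simp add: mult_ac)
    also have "\<dots> = complex_of_real ((cmod (U $$ (i, k)))\<^sup>2 * lam k)"
      by (simp add: complex_norm_square[symmetric])
    finally show "U $$ (i, k) * complex_of_real (lam k) * cnj (U $$ (i, k)) = complex_of_real ((cmod (U $$ (i, k)))\<^sup>2 * lam k)" .
  qed
  finally show ?thesis by simp
qed

lemma unitary_col_norm:
  assumes U: "unitary n U" and k: "k < n"
  shows "(\<Sum>i<n. (cmod (U $$ (i, k)))\<^sup>2) = 1"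
proof -
  have Uc: "U \<in> carrier_mat n n" and UU: "adj U * U = 1\<^sub>m n" using U unfolding unitary_def by auto
  have "complex_of_real (\<Sum>i<n. (cmod (U $$ (i, k)))\<^sup>2) = (\<Sum>i<n. cnj (U $$ (i, k)) * U $$ (i, k))"
    unfolding of_real_sum by (intro sum.cong refl) (subst complex_norm_square, rule mult.commute)
  also have "\<dots> = (adj U * U) $$ (k, k)"
    using Uc k by (subst mult_entry[OF adj_carrier[OF Uc] Uc k k]) (intro sum.cong refl; simp)
  also have "\<dots> = 1" using UU k by simp
  finally show ?thesis by (metis of_real_eq_1_iff)
qed

lemma unitary_row_norm:
  assumes U: "unitary n U" and k: "k < n"
  shows "(\<Sum>i<n. (cmod (U $$ (k, i)))\<^sup>2) = 1"
proof -
  have U': "unitary n (adj U)" by (rule unitary_adj[OF U])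
  have Uc: "U \<in> carrier_mat n n" using U unfolding unitary_def by auto
  have "(\<Sum>i<n. (cmod (U $$ (k, i)))\<^sup>2) = (\<Sum>i<n. (cmod (adj U $$ (i, k)))\<^sup>2)"
    using Uc k by (intro sum.cong refl) simp
  also have "\<dots> = 1" by (rule unitary_col_norm[OF U' k])
  finally show ?thesis .
qed

lemma exp_sums_real: "(\<lambda>k. x ^ k / fact k) sums exp (x::real)"
  using exp_converges[of x] by (simp add: divide_inverse scaleR_conv_of_real mult.commute)

lemma trace_mexp_udu:
  assumes U: "unitary n U"
  shows "mtrace (mexp (U * dmat n lam * adj U)) = complex_of_real (\<Sum>k<n. exp (lam k))"
proof -
  have Uc: "U \<in> carrier_mat n n" using U unfolding unitary_def by auto
  define X where "X = U * dmat n lam * adj U"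
  have Xc: "X \<in> carrier_mat n n" unfolding X_def
    using mult_carrier_mat[OF mult_carrier_mat[OF Uc dmat_carrier] adj_carrier[OF Uc]] .
  define c where "c i l = (cmod (U $$ (i, l)))\<^sup>2" for i l
  have diag: "mexp X $$ (i, i) = complex_of_real (\<Sum>l<n. c i l * exp (lam l))" if i: "i < n" for i
  proof -
    have tm: "(X ^\<^sub>m k) $$ (i, i) / of_nat (fact k) = complex_of_real (\<Sum>l<n. c i l * (lam l ^ k / fact k))" for k
    proof -
      have "(X ^\<^sub>m k) $$ (i, i) = complex_of_real (\<Sum>l<n. c i l * lam l ^ k)"
        unfolding X_def pow_udu[OF U] by (simp add: udu_diag[OF Uc i] c_def)
      then show ?thesis by (simp add: sum_divide_distrib)
    qed
    have "(\<lambda>k. \<Sum>l<n. c i l * (lam l ^ k / fact k)) sums (\<Sum>l<n. c i l * exp (lam l))"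
      by (intro sums_sum sums_mult exp_sums_real)
    then have "(\<lambda>k. complex_of_real (\<Sum>l<n. c i l * (lam l ^ k / fact k))) sums complex_of_real (\<Sum>l<n. c i l * exp (lam l))"
      by (simp only: sums_of_real_iff)
    then have "(\<lambda>k. (X ^\<^sub>m k) $$ (i, i) / of_nat (fact k)) sums complex_of_real (\<Sum>l<n. c i l * exp (lam l))"
      by (simp only: tm)
    then have "(\<Sum>k. (X ^\<^sub>m k) $$ (i, i) / of_nat (fact k)) = complex_of_real (\<Sum>l<n. c i l * exp (lam l))"
      by (rule sums_unique[symmetric])
    then show ?thesis unfolding mexp_def using Xc i by simp
  qed
  have "mtrace (mexp X) = (\<Sum>i<n. mexp X $$ (i, i))"
    unfolding mtrace_def mexp_def using Xc by simp
  also have "\<dots> = complex_of_real (\<Sum>i<n. \<Sum>l<n. c i l * exp (lam l))"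
    by (simp add: diag)
  also have "(\<Sum>i<n. \<Sum>l<n. c i l * exp (lam l)) = (\<Sum>l<n. exp (lam l) * (\<Sum>i<n. c i l))"
    by (subst sum.swap) (simp add: sum_distrib_left mult.commute)
  also have "\<dots> = (\<Sum>l<n. exp (lam l))"
    by (intro sum.cong refl) (simp add: c_def unitary_col_norm[OF U])
  finally show ?thesis unfolding X_def .
qed

section \<open>Peierls-type inequality\<close>

lemma quad_entry_bound:
  assumes U: "unitary n U" and C: "C \<in> carrier_mat n n" and i: "i < n"
  shows "cmod ((adj U * C * U) $$ (i, i)) \<le> opnorm C"
proof -
  have Uc: "U \<in> carrier_mat n n" using U unfolding unitary_def by auto
  have dU: "dim_row U = n" "dim_col U = n" using Uc by auto
  have dC: "dim_row C = n" "dim_col C = n" using C by auto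
  define u where "u = col U i"
  have du: "dim_vec u = n" unfolding u_def using dU by simp
  have ui: "u $ k = U $$ (k, i)" if "k < n" for k unfolding u_def using that dU i by simp
  have u1: "vnorm u = 1"
  proof -
    have "(\<Sum>k<n. (cmod (u $ k))\<^sup>2) = (\<Sum>k<n. (cmod (U $$ (k, i)))\<^sup>2)"
      by (intro sum.cong refl) (simp add: ui)
    also have "\<dots> = 1" by (rule unitary_col_norm[OF U i])
    finally show ?thesis unfolding vnorm_def du by simp
  qed
  have "adj U * C * U = adj U * (C * U)" by (rule assoc_mult_mat[OF adj_carrier[OF Uc] C Uc])
  then have "(adj U * C * U) $$ (i, i) = (adj U * (C * U)) $$ (i, i)" by simp
  also have "\<dots> = (\<Sum>k<n. adj U $$ (i, k) * (C * U) $$ (k, i))"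
    by (rule mult_entry[OF adj_carrier[OF Uc] mult_carrier_mat[OF C Uc] i i])
  also have "\<dots> = (\<Sum>k<n. cnj (u $ k) * (C *\<^sub>v u) $ k)"
  proof (intro sum.cong refl)
    fix k assume "k \<in> {..<n}"
    then have k: "k < n" by simp
    have "(C * U) $$ (k, i) = (C *\<^sub>v u) $ k" unfolding u_def using k i dC dU by simp
    then show "adj U $$ (i, k) * (C * U) $$ (k, i) = cnj (u $ k) * (C *\<^sub>v u) $ k"
      using k i dU by (simp add: ui)
  qed
  finally have "(adj U * C * U) $$ (i, i) = (\<Sum>k<n. cnj (u $ k) * (C *\<^sub>v u) $ k)" .
  then show ?thesis using quad_form_bound[OF C du u1] by simp
qed

lemma conj_udu:
  assumes U: "unitary n U"
  shows "adj U * (U * dmat n a * adj U) * U = dmat n a"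
proof -
  have Uc: "U \<in> carrier_mat n n" and UU: "adj U * U = 1\<^sub>m n" using U unfolding unitary_def by auto
  have "adj U * (U * dmat n a * adj U) * U = (adj U * U) * dmat n a * (adj U * U)"
    by (rule assoc5[OF adj_carrier[OF Uc] Uc dmat_carrier adj_carrier[OF Uc] Uc])
  then show ?thesis unfolding UU
    using left_mult_one_mat[OF dmat_carrier] right_mult_one_mat[OF dmat_carrier] by simp
qed

lemma conj_vdv:
  assumes U: "unitary n U" and V: "unitary n V"
  shows "adj U * (V * dmat n b * adj V) * U = (adj U * V) * dmat n b * adj (adj U * V)"
proof -
  have Uc: "U \<in> carrier_mat n n" and Vc: "V \<in> carrier_mat n n" using U V unfolding unitary_def by auto
  have "adj (adj U * V) = adj V * U" using adj_mult[OF adj_carrier[OF Uc] Vc] by simp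
  then show ?thesis
    using assoc5[OF adj_carrier[OF Uc] Vc dmat_carrier adj_carrier[OF Vc] Uc] by simp
qed

lemma peierls:
  assumes U: "unitary n U" and V: "unitary n V"
    and A: "A = U * dmat n a * adj U" and B: "B = V * dmat n b * adj V"
  shows "(\<Sum>i<n. exp (a i)) \<le> exp (opnorm (A - B)) * (\<Sum>j<n. exp (b j))"
proof -
  have Uc: "U \<in> carrier_mat n n" and Vc: "V \<in> carrier_mat n n" using U V unfolding unitary_def by auto
  have Ac: "A \<in> carrier_mat n n" unfolding A
    using mult_carrier_mat[OF mult_carrier_mat[OF Uc dmat_carrier] adj_carrier[OF Uc]] .
  have Bc: "B \<in> carrier_mat n n" unfolding B
    using mult_carrier_mat[OF mult_carrier_mat[OF Vc dmat_carrier] adj_carrier[OF Vc]] .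
  define eps where "eps = opnorm (A - B)"
  define X where "X = adj U * V"
  have uX: "unitary n X" unfolding X_def by (rule unitary_mult[OF unitary_adj[OF U] V])
  have Xc: "X \<in> carrier_mat n n" using uX unfolding unitary_def by auto
  define p where "p i j = (cmod (X $$ (i, j)))\<^sup>2" for i j
  have p0: "0 \<le> p i j" for i j unfolding p_def by simp
  have prow: "(\<Sum>j<n. p i j) = 1" if "i < n" for i unfolding p_def by (rule unitary_row_norm[OF uX that])
  have pcol: "(\<Sum>i<n. p i j) = 1" if "j < n" for j unfolding p_def by (rule unitary_col_norm[OF uX that])
  have key: "a i \<le> eps + (\<Sum>j<n. p i j * b j)" if i: "i < n" for i
  proof -
    have CC: "A - B \<in> carrier_mat n n" by (rule minus_carrier_mat[OF Bc])
    have "adj U * (A - B) * U = (adj U * A - adj U * B) * U"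
      using mult_minus_distrib_mat[OF adj_carrier[OF Uc] Ac Bc] by simp
    also have "\<dots> = adj U * A * U - adj U * B * U"
      by (rule minus_mult_distrib_mat[OF mult_carrier_mat[OF adj_carrier[OF Uc] Ac] mult_carrier_mat[OF adj_carrier[OF Uc] Bc] Uc])
    also have "adj U * A * U = dmat n a" unfolding A by (rule conj_udu[OF U])
    also have "adj U * B * U = X * dmat n b * adj X" unfolding B X_def by (rule conj_vdv[OF U V])
    finally have eq: "adj U * (A - B) * U = dmat n a - X * dmat n b * adj X" .
    have XD: "X * dmat n b * adj X \<in> carrier_mat n n"
      using mult_carrier_mat[OF mult_carrier_mat[OF Xc dmat_carrier] adj_carrier[OF Xc]] .
    then have dXD: "dim_row (X * dmat n b * adj X) = n" "dim_col (X * dmat n b * adj X) = n" by auto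
    have "(adj U * (A - B) * U) $$ (i, i) = dmat n a $$ (i, i) - (X * dmat n b * adj X) $$ (i, i)"
      unfolding eq using i dXD by (subst index_minus_mat) simp_all
    also have "dmat n a $$ (i, i) = complex_of_real (a i)" using i by (simp add: dmat_def)
    also have "(X * dmat n b * adj X) $$ (i, i) = complex_of_real (\<Sum>j<n. p i j * b j)"
      unfolding p_def by (rule udu_diag[OF Xc i])
    finally have "(adj U * (A - B) * U) $$ (i, i) = complex_of_real (a i - (\<Sum>j<n. p i j * b j))" by simp
    moreover have "cmod ((adj U * (A - B) * U) $$ (i, i)) \<le> eps"
      using quad_entry_bound[OF U CC i] unfolding eps_def .
    ultimately have "cmod (complex_of_real (a i - (\<Sum>j<n. p i j * b j))) \<le> eps" by (simp only:)
    then have "\<bar>a i - (\<Sum>j<n. p i j * b j)\<bar> \<le> eps" by (simp only: norm_of_real)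
    then show ?thesis by linarith
  qed
  have "exp (a i) \<le> exp eps * (\<Sum>j<n. p i j * exp (b j))" if i: "i < n" for i
  proof -
    have "exp (a i) \<le> exp (eps + (\<Sum>j<n. p i j * b j))" using key[OF i] by simp
    also have "\<dots> = exp eps * exp (\<Sum>j<n. p i j * b j)" by (simp add: exp_add)
    also have "exp (\<Sum>j<n. p i j * b j) \<le> (\<Sum>j<n. p i j * exp (b j))"
    proof -
      have "exp (\<Sum>j\<in>{..<n}. p i j *\<^sub>R b j) \<le> (\<Sum>j\<in>{..<n}. p i j * exp (b j))"
        by (rule convex_on_sum[OF _ _ exp_convex]) (use i prow[OF i] p0 in auto)
      then show ?thesis by simp
    qed
    then have "exp eps * exp (\<Sum>j<n. p i j * b j) \<le> exp eps * (\<Sum>j<n. p i j * exp (b j))"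
      by (intro mult_left_mono) auto
    finally show ?thesis .
  qed
  then have "(\<Sum>i<n. exp (a i)) \<le> (\<Sum>i<n. exp eps * (\<Sum>j<n. p i j * exp (b j)))"
    by (intro sum_mono) auto
  also have "\<dots> = exp eps * (\<Sum>i<n. \<Sum>j<n. p i j * exp (b j))" by (simp add: sum_distrib_left)
  also have "(\<Sum>i<n. \<Sum>j<n. p i j * exp (b j)) = (\<Sum>j<n. \<Sum>i<n. p i j * exp (b j))"
    by (rule sum.swap)
  also have "\<dots> = (\<Sum>j<n. (\<Sum>i<n. p i j) * exp (b j))" by (simp add: sum_distrib_right)
  also have "\<dots> = (\<Sum>j<n. exp (b j))" by (intro sum.cong refl) (simp add: pcol)
  finally show ?thesis unfolding eps_def .
qed

lemma opnorm_swap: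
  assumes A: "A \<in> carrier_mat n k" and B: "B \<in> carrier_mat n k"
  shows "opnorm (B - A) \<le> opnorm (A - B)"
proof -
  have dA: "dim_row A = n" "dim_col A = k" using A by auto
  have dB: "dim_row B = n" "dim_col B = k" using B by auto
  have "B - A = (-1) \<cdot>\<^sub>m (A - B)"
    by (rule eq_matI) (simp_all add: dA dB)
  then have "opnorm (B - A) \<le> cmod (-1) * opnorm (A - B)" using opnorm_smult by metis
  then show ?thesis by simp
qed

lemma trace_pos_decomp:
  assumes "selfadjoint n A"
  shows "\<exists>U a. unitary n U \<and> A = U * dmat n a * adj U \<and> Re (mtrace (mexp A)) = (\<Sum>i<n. exp (a i))"
proof -
  obtain U a where U: "unitary n U" and A: "A = U * dmat n a * adj U" using spectral[OF assms] by blast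
  then have "Re (mtrace (mexp A)) = (\<Sum>i<n. exp (a i))" using trace_mexp_udu[OF U] by simp
  then show ?thesis using U A by blast
qed

lemma logtrace_lip:
  assumes A: "selfadjoint n A" and B: "selfadjoint n B" and n: "0 < n"
  shows "\<bar>ln (Re (mtrace (mexp A))) - ln (Re (mtrace (mexp B)))\<bar> \<le> opnorm (A - B)"
proof -
  obtain U a where U: "unitary n U" and Ad: "A = U * dmat n a * adj U"
    and TA: "Re (mtrace (mexp A)) = (\<Sum>i<n. exp (a i))" using trace_pos_decomp[OF A] by blast
  obtain V b where V: "unitary n V" and Bd: "B = V * dmat n b * adj V"
    and TB: "Re (mtrace (mexp B)) = (\<Sum>i<n. exp (b i))" using trace_pos_decomp[OF B] by blast
  have Ac: "A \<in> carrier_mat n n" and Bc: "B \<in> carrier_mat n n" using A B by (auto simp: selfadjoint_def)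
  define eps where "eps = opnorm (A - B)"
  have pa: "0 < (\<Sum>i<n. exp (a i))" using n by (intro sum_pos) auto
  have pb: "0 < (\<Sum>i<n. exp (b i))" using n by (intro sum_pos) auto
  have 1: "(\<Sum>i<n. exp (a i)) \<le> exp eps * (\<Sum>j<n. exp (b j))"
    unfolding eps_def by (rule peierls[OF U V Ad Bd])
  have "(\<Sum>i<n. exp (b i)) \<le> exp (opnorm (B - A)) * (\<Sum>j<n. exp (a j))"
    by (rule peierls[OF V U Bd Ad])
  also have "\<dots> \<le> exp eps * (\<Sum>j<n. exp (a j))"
    unfolding eps_def using opnorm_swap[OF Ac Bc] pa by (intro mult_right_mono) auto
  finally have 2: "(\<Sum>i<n. exp (b i)) \<le> exp eps * (\<Sum>j<n. exp (a j))" .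
  have l1: "ln (\<Sum>i<n. exp (a i)) \<le> eps + ln (\<Sum>i<n. exp (b i))"
  proof -
    have "ln (\<Sum>i<n. exp (a i)) \<le> ln (exp eps * (\<Sum>j<n. exp (b j)))"
      using 1 pa by (subst ln_le_cancel_iff) auto
    also have "\<dots> = eps + ln (\<Sum>j<n. exp (b j))" using pb by (simp add: ln_mult)
    finally show ?thesis .
  qed
  have l2: "ln (\<Sum>i<n. exp (b i)) \<le> eps + ln (\<Sum>i<n. exp (a i))"
  proof -
    have "ln (\<Sum>i<n. exp (b i)) \<le> ln (exp eps * (\<Sum>j<n. exp (a j)))"
      using 2 pb by (subst ln_le_cancel_iff) auto
    also have "\<dots> = eps + ln (\<Sum>j<n. exp (a j))" using pa by (simp add: ln_mult)
    finally show ?thesis .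
  qed
  show ?thesis unfolding TA TB eps_def[symmetric] using l1 l2 by linarith
qed

lemma selfadjoint_smult_real:
  assumes A: "selfadjoint n A"
  shows "selfadjoint n (complex_of_real c \<cdot>\<^sub>m A)"
proof -
  have Ac: "A \<in> carrier_mat n n" and hA: "\<And>i j. i < n \<Longrightarrow> j < n \<Longrightarrow> A $$ (i, j) = cnj (A $$ (j, i))"
    using A unfolding selfadjoint_def by blast+
  have dA: "dim_row A = n" "dim_col A = n" using Ac by auto
  show ?thesis unfolding selfadjoint_def
  proof (intro conjI allI impI)
    show "complex_of_real c \<cdot>\<^sub>m A \<in> carrier_mat n n" using Ac by simp
    fix i j assume i: "i < n" and j: "j < n"
    have "(complex_of_real c \<cdot>\<^sub>m A) $$ (i, j) = complex_of_real c * A $$ (i, j)" using i j dA by simp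
    also have "\<dots> = complex_of_real c * cnj (A $$ (j, i))" by (simp only: hA[OF i j])
    also have "\<dots> = cnj ((complex_of_real c \<cdot>\<^sub>m A) $$ (j, i))" using i j dA by simp
    finally show "(complex_of_real c \<cdot>\<^sub>m A) $$ (i, j) = cnj ((complex_of_real c \<cdot>\<^sub>m A) $$ (j, i))" .
  qed
qed

lemma smult_diff_mat:
  fixes A B :: "complex mat"
  assumes A: "A \<in> carrier_mat n k" and B: "B \<in> carrier_mat n k"
  shows "c \<cdot>\<^sub>m A - c \<cdot>\<^sub>m B = c \<cdot>\<^sub>m (A - B)"
proof -
  have dA: "dim_row A = n" "dim_col A = k" using A by auto
  have dB: "dim_row B = n" "dim_col B = k" using B by auto
  show ?thesis by (rule eq_matI) (simp_all add: dA dB right_diff_distrib)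
qed

lemma psi_diff:
  assumes H1: "selfadjoint n (nc_eval n eta X)" and H2: "selfadjoint n (nc_eval n eta Y)"
    and n: "0 < n" and N: "0 < N"
    and X: "X = (\<lambda>i. (1 / of_nat N) \<cdot>\<^sub>m X' i)" and Y: "Y = (\<lambda>i. (1 / of_nat N) \<cdot>\<^sub>m Y' i)"
  shows "\<bar>psi n N eta X' - psi n N eta Y'\<bar> \<le> opnorm (nc_eval n eta X - nc_eval n eta Y)"
proof -
  define H where "H = nc_eval n eta X"
  define G where "G = nc_eval n eta Y"
  have Hc: "H \<in> carrier_mat n n" and Gc: "G \<in> carrier_mat n n"
    using H1 H2 unfolding H_def G_def selfadjoint_def by blast+
  have eqc: "(- of_nat N :: complex) = complex_of_real (- real N)" by simp
  define M1 where "M1 = (- of_nat N :: complex) \<cdot>\<^sub>m H"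
  define M2 where "M2 = (- of_nat N :: complex) \<cdot>\<^sub>m G"
  have s1: "selfadjoint n M1" unfolding M1_def eqc H_def by (rule selfadjoint_smult_real[OF H1])
  have s2: "selfadjoint n M2" unfolding M2_def eqc G_def by (rule selfadjoint_smult_real[OF H2])
  have lip: "\<bar>ln (Re (mtrace (mexp M1))) - ln (Re (mtrace (mexp M2)))\<bar> \<le> opnorm (M1 - M2)"
    by (rule logtrace_lip[OF s1 s2 n])
  have "M1 - M2 = (- of_nat N :: complex) \<cdot>\<^sub>m (H - G)"
    unfolding M1_def M2_def by (rule smult_diff_mat[OF Hc Gc])
  then have "opnorm (M1 - M2) \<le> cmod (- of_nat N :: complex) * opnorm (H - G)"
    using opnorm_smult by metis
  also have "cmod (- of_nat N :: complex) = real N" by simp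
  finally have "\<bar>ln (Re (mtrace (mexp M1))) - ln (Re (mtrace (mexp M2)))\<bar> \<le> real N * opnorm (H - G)"
    using lip by linarith
  moreover have "psi n N eta X' - psi n N eta Y' = - (ln (Re (mtrace (mexp M1))) - ln (Re (mtrace (mexp M2)))) / real N"
    unfolding psi_def M1_def M2_def H_def G_def X Y by (simp add: diff_divide_distrib)
  ultimately have "\<bar>psi n N eta X' - psi n N eta Y'\<bar> \<le> opnorm (H - G)" using N
    by (simp add: abs_minus_commute divide_le_eq mult.commute)
  then show ?thesis unfolding H_def G_def .
qed

section \<open>Noncommutative polynomials\<close>

lemma wp_Nil[simp]: "word_prod n x [] = 1\<^sub>m n"
  by (simp add: word_prod_def)

lemma wp_Cons[simp]: "word_prod n x (i # w) = x i * word_prod n x w"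
  by (simp add: word_prod_def)

lemma wp_carrier:
  assumes "\<forall>i\<in>set w. x i \<in> carrier_mat n n"
  shows "word_prod n x w \<in> carrier_mat n n"
  using assms by (induction w) auto

lemma wp_norm:
  assumes "\<forall>i\<in>set w. x i \<in> carrier_mat n n \<and> opnorm (x i) \<le> K" and K: "0 \<le> K"
  shows "opnorm (word_prod n x w) \<le> K ^ length w"
  using assms(1)
proof (induction w)
  case Nil
  then show ?case using opnorm_one by simp
next
  case (Cons i w)
  have xi: "x i \<in> carrier_mat n n" and ni: "opnorm (x i) \<le> K" using Cons.prems by auto
  have P: "word_prod n x w \<in> carrier_mat n n" using Cons.prems by (intro wp_carrier) auto
  have "opnorm (word_prod n x (i # w)) \<le> opnorm (x i) * opnorm (word_prod n x w)"
    using opnorm_mult[OF xi P] by simp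
  also have "\<dots> \<le> K * K ^ length w"
    using Cons ni K opnorm_nonneg by (intro mult_mono) auto
  finally show ?case by simp
qed

lemma diff_split_mat:
  fixes X Y P Q :: "complex mat"
  assumes X: "X \<in> carrier_mat n n" and Y: "Y \<in> carrier_mat n n"
    and P: "P \<in> carrier_mat n n" and Q: "Q \<in> carrier_mat n n"
  shows "X * P - Y * Q = X * (P - Q) + (X - Y) * Q"
proof -
  have "X * (P - Q) = X * P - X * Q" by (rule mult_minus_distrib_mat[OF X P Q])
  moreover have "(X - Y) * Q = X * Q - Y * Q" by (rule minus_mult_distrib_mat[OF X Y Q])
  moreover have "X * P - Y * Q = (X * P - X * Q) + (X * Q - Y * Q)"
  proof -
    have c1: "X * P \<in> carrier_mat n n" "X * Q \<in> carrier_mat n n" "Y * Q \<in> carrier_mat n n"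
      using X Y P Q by auto
    then have d: "dim_row (X * P) = n" "dim_col (X * P) = n" "dim_row (X * Q) = n" "dim_col (X * Q) = n"
      "dim_row (Y * Q) = n" "dim_col (Y * Q) = n" by auto
    show ?thesis by (rule eq_matI) (simp_all only: index_minus_mat index_add_mat d, simp_all)
  qed
  ultimately show ?thesis by simp
qed

lemma wp_diff:
  assumes "\<forall>i\<in>set w. x i \<in> carrier_mat n n \<and> y i \<in> carrier_mat n n \<and> opnorm (x i) \<le> K
      \<and> opnorm (y i) \<le> K \<and> opnorm (x i - y i) \<le> \<delta>"
    and K: "1 \<le> K" and d: "0 \<le> \<delta>"
  shows "opnorm (word_prod n x w - word_prod n y w) \<le> real (length w) * K ^ length w * \<delta>"
  using assms(1)
proof (induction w)
  case Nil
  have "1\<^sub>m n - 1\<^sub>m n = (0 :: complex) \<cdot>\<^sub>m 1\<^sub>m n" by (rule eq_matI) auto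
  then have "opnorm (1\<^sub>m n - 1\<^sub>m n :: complex mat) \<le> cmod 0 * opnorm (1\<^sub>m n :: complex mat)"
    by (metis opnorm_smult)
  then show ?case by simp
next
  case (Cons i w)
  have xi: "x i \<in> carrier_mat n n" and yi: "y i \<in> carrier_mat n n" and nxi: "opnorm (x i) \<le> K"
    and dxy: "opnorm (x i - y i) \<le> \<delta>" using Cons.prems by auto
  have ih: "opnorm (word_prod n x w - word_prod n y w) \<le> real (length w) * K ^ length w * \<delta>"
    using Cons by auto
  have P: "word_prod n x w \<in> carrier_mat n n" using Cons.prems by (intro wp_carrier) auto
  have Q: "word_prod n y w \<in> carrier_mat n n" using Cons.prems by (intro wp_carrier) auto
  have nQ: "opnorm (word_prod n y w) \<le> K ^ length w"
    using Cons.prems K by (intro wp_norm) auto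
  have PQ: "word_prod n x w - word_prod n y w \<in> carrier_mat n n" by (rule minus_carrier_mat[OF Q])
  have XY: "x i - y i \<in> carrier_mat n n" by (rule minus_carrier_mat[OF yi])
  have "word_prod n x (i # w) - word_prod n y (i # w)
      = x i * (word_prod n x w - word_prod n y w) + (x i - y i) * word_prod n y w"
    using diff_split_mat[OF xi yi P Q] by simp
  then have "opnorm (word_prod n x (i # w) - word_prod n y (i # w))
      \<le> opnorm (x i * (word_prod n x w - word_prod n y w)) + opnorm ((x i - y i) * word_prod n y w)"
    using opnorm_add[OF mult_carrier_mat[OF xi PQ] mult_carrier_mat[OF XY Q]] by simp
  also have "\<dots> \<le> opnorm (x i) * opnorm (word_prod n x w - word_prod n y w) + opnorm (x i - y i) * opnorm (word_prod n y w)"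
    by (intro add_mono opnorm_mult[OF xi PQ] opnorm_mult[OF XY Q])
  also have "\<dots> \<le> K * (real (length w) * K ^ length w * \<delta>) + \<delta> * K ^ length w"
    using K d nxi dxy ih nQ opnorm_nonneg by (intro add_mono mult_mono) auto
  also have "\<dots> \<le> K * (real (length w) * K ^ length w * \<delta>) + \<delta> * K ^ Suc (length w)"
  proof -
    have "K ^ length w \<le> K ^ Suc (length w)" using K by (intro power_increasing) auto
    then show ?thesis using d by (intro add_left_mono mult_left_mono) auto
  qed
  also have "\<dots> = real (length (i # w)) * K ^ length (i # w) * \<delta>"
    by (simp add: algebra_simps)
  finally show ?case .
qed

lemma opnorm_zero_mat: "opnorm (mat n n (\<lambda>_. 0 :: complex)) \<le> 0"
proof (rule opnorm_le)
  fix v :: "complex vec" assume "dim_vec v = dim_col (mat n n (\<lambda>_. 0 :: complex))"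
  then have dv: "dim_vec v = n" by simp
  have "vnorm (mat n n (\<lambda>_. 0 :: complex) *\<^sub>v v) = 0"
    by (subst vnorm_zero_iff) (simp add: scalar_prod_def dv)
  then show "vnorm (mat n n (\<lambda>_. 0) *\<^sub>v v) \<le> 0 * vnorm v" by simp
qed simp

lemma opnorm_sum_mat:
  assumes S: "finite S" and M: "\<forall>w\<in>S. M w \<in> carrier_mat n n"
  shows "opnorm (mat n n (\<lambda>ij. \<Sum>w\<in>S. c w * M w $$ ij)) \<le> (\<Sum>w\<in>S. cmod (c w) * opnorm (M w))"
  using S M
proof (induction S rule: finite_induct)
  case empty
  have "mat n n (\<lambda>ij. \<Sum>w\<in>{}. c w * M w $$ ij) = mat n n (\<lambda>_. 0)" by simp
  then show ?case using opnorm_zero_mat by simp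
next
  case (insert w S)
  have Mw: "M w \<in> carrier_mat n n" using insert.prems by auto
  then have dM: "dim_row (M w) = n" "dim_col (M w) = n" by auto
  have R: "mat n n (\<lambda>ij. \<Sum>w\<in>S. c w * M w $$ ij) \<in> carrier_mat n n" by simp
  have "mat n n (\<lambda>ij. \<Sum>w\<in>insert w S. c w * M w $$ ij)
      = c w \<cdot>\<^sub>m M w + mat n n (\<lambda>ij. \<Sum>w\<in>S. c w * M w $$ ij)"
    by (rule eq_matI) (simp_all add: insert.hyps dM)
  then have "opnorm (mat n n (\<lambda>ij. \<Sum>w\<in>insert w S. c w * M w $$ ij))
      \<le> opnorm (c w \<cdot>\<^sub>m M w) + opnorm (mat n n (\<lambda>ij. \<Sum>w\<in>S. c w * M w $$ ij))"
    using opnorm_add[OF smult_carrier_mat[OF Mw] R] by simp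
  also have "\<dots> \<le> cmod (c w) * opnorm (M w) + (\<Sum>w\<in>S. cmod (c w) * opnorm (M w))"
    using insert by (intro add_mono opnorm_smult) auto
  finally show ?case using insert.hyps by simp
qed

lemma nc_eval_diff:
  assumes S: "finite {w. eta w \<noteq> 0}"
    and C: "\<forall>w. eta w \<noteq> 0 \<longrightarrow> word_prod n x w \<in> carrier_mat n n \<and> word_prod n y w \<in> carrier_mat n n"
  shows "opnorm (nc_eval n eta x - nc_eval n eta y)
    \<le> (\<Sum>w\<in>{w. eta w \<noteq> 0}. \<bar>eta w\<bar> * opnorm (word_prod n x w - word_prod n y w))"
proof -
  let ?S = "{w. eta w \<noteq> 0}"
  have "nc_eval n eta x - nc_eval n eta y
      = mat n n (\<lambda>ij. \<Sum>w\<in>?S. complex_of_real (eta w) * (word_prod n x w - word_prod n y w) $$ ij)"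
  proof (rule eq_matI)
    fix i j assume "i < dim_row (mat n n (\<lambda>ij. \<Sum>w\<in>?S. complex_of_real (eta w) * (word_prod n x w - word_prod n y w) $$ ij))"
      "j < dim_col (mat n n (\<lambda>ij. \<Sum>w\<in>?S. complex_of_real (eta w) * (word_prod n x w - word_prod n y w) $$ ij))"
    then have i: "i < n" and j: "j < n" by auto
    have "(nc_eval n eta x - nc_eval n eta y) $$ (i, j)
        = (\<Sum>w\<in>?S. complex_of_real (eta w) * word_prod n x w $$ (i, j))
          - (\<Sum>w\<in>?S. complex_of_real (eta w) * word_prod n y w $$ (i, j))"
      using i j by (simp add: nc_eval_def)
    also have "\<dots> = (\<Sum>w\<in>?S. complex_of_real (eta w) * (word_prod n x w - word_prod n y w) $$ (i, j))"
    proof -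
      have "(word_prod n x w - word_prod n y w) $$ (i, j) = word_prod n x w $$ (i, j) - word_prod n y w $$ (i, j)"
        if "w \<in> ?S" for w
      proof -
        have "word_prod n y w \<in> carrier_mat n n" using C that by auto
        then show ?thesis using i j by simp
      qed
      then show ?thesis by (simp add: sum_subtractf[symmetric] right_diff_distrib)
    qed
    finally show "(nc_eval n eta x - nc_eval n eta y) $$ (i, j)
      = mat n n (\<lambda>ij. \<Sum>w\<in>?S. complex_of_real (eta w) * (word_prod n x w - word_prod n y w) $$ ij) $$ (i, j)"
      using i j by simp
  qed (simp_all add: nc_eval_def)
  also have "opnorm \<dots> \<le> (\<Sum>w\<in>?S. cmod (complex_of_real (eta w)) * opnorm (word_prod n x w - word_prod n y w))"
    by (rule opnorm_sum_mat[OF S]) (use C in \<open>auto intro: minus_carrier_mat\<close>)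
  finally show ?thesis by simp
qed

lemma wp_comm:
  assumes "\<forall>i\<in>set w. x i \<in> carrier_mat n n \<and> x j * x i = x i * x j" and xj: "x j \<in> carrier_mat n n"
  shows "x j * word_prod n x w = word_prod n x w * x j"
  using assms(1)
proof (induction w)
  case Nil
  then show ?case using xj by simp
next
  case (Cons i w)
  have xi: "x i \<in> carrier_mat n n" and c: "x j * x i = x i * x j" using Cons.prems by auto
  have P: "word_prod n x w \<in> carrier_mat n n" using Cons.prems by (intro wp_carrier) auto
  have ih: "x j * word_prod n x w = word_prod n x w * x j" using Cons by auto
  have "x j * (x i * word_prod n x w) = (x j * x i) * word_prod n x w"
    using assoc_mult_mat[OF xj xi P] by simp
  also have "\<dots> = x i * (x j * word_prod n x w)" unfolding c by (rule assoc_mult_mat[OF xi xj P])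
  also have "\<dots> = x i * (word_prod n x w * x j)" unfolding ih ..
  also have "\<dots> = (x i * word_prod n x w) * x j" using assoc_mult_mat[OF xi P xj] by simp
  finally show ?case by simp
qed

lemma wp_herm:
  assumes "\<forall>i\<in>I. selfadjoint n (x i)" and "\<forall>i\<in>I. \<forall>j\<in>I. x i * x j = x j * x i"
    and "set w \<subseteq> I"
  shows "adj (word_prod n x w) = word_prod n x w"
  using assms(3)
proof (induction w)
  case Nil
  show ?case by (rule eq_matI) (auto simp: adj_def)
next
  case (Cons i w)
  have iI: "i \<in> I" and wI: "set w \<subseteq> I" using Cons.prems by auto
  have xi: "x i \<in> carrier_mat n n" and axi: "adj (x i) = x i"
    using assms(1) iI by (auto simp: selfadjoint_adj)
  have xc: "\<forall>k\<in>set w. x k \<in> carrier_mat n n" using assms(1) wI by (auto simp: selfadjoint_adj)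
  have P: "word_prod n x w \<in> carrier_mat n n" using xc by (rule wp_carrier)
  have "adj (word_prod n x (i # w)) = adj (word_prod n x w) * adj (x i)"
    using adj_mult[OF xi P] by simp
  also have "\<dots> = word_prod n x w * x i" using Cons wI axi by simp
  also have "\<dots> = x i * word_prod n x w"
  proof -
    have "\<forall>k\<in>set w. x k \<in> carrier_mat n n \<and> x i * x k = x k * x i"
      using xc assms(2) iI wI by blast
    from wp_comm[OF this xi] show ?thesis by simp
  qed
  finally show ?case by simp
qed

lemma nc_eval_selfadjoint:
  assumes S: "finite {w. eta w \<noteq> 0}" and W: "\<forall>w. eta w \<noteq> 0 \<longrightarrow> set w \<subseteq> I"
    and H: "\<forall>i\<in>I. selfadjoint n (x i)" and C: "\<forall>i\<in>I. \<forall>j\<in>I. x i * x j = x j * x i"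
  shows "selfadjoint n (nc_eval n eta x)"
  unfolding selfadjoint_def
proof (intro conjI allI impI)
  show "nc_eval n eta x \<in> carrier_mat n n" by (simp add: nc_eval_def)
  fix i j assume i: "i < n" and j: "j < n"
  have e: "word_prod n x w $$ (i, j) = cnj (word_prod n x w $$ (j, i))" if "eta w \<noteq> 0" for w
  proof -
    have a: "adj (word_prod n x w) = word_prod n x w" using wp_herm[OF H C] W that by blast
    have "word_prod n x w \<in> carrier_mat n n"
      using H W that by (intro wp_carrier) (auto simp: selfadjoint_adj)
    then have d: "dim_row (word_prod n x w) = n" "dim_col (word_prod n x w) = n" by auto
    have "word_prod n x w $$ (i, j) = adj (word_prod n x w) $$ (i, j)" using a by simp
    also have "\<dots> = cnj (word_prod n x w $$ (j, i))" using i j d by simp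
    finally show ?thesis .
  qed
  have "nc_eval n eta x $$ (i, j) = (\<Sum>w\<in>{w. eta w \<noteq> 0}. complex_of_real (eta w) * word_prod n x w $$ (i, j))"
    using i j by (simp add: nc_eval_def)
  also have "\<dots> = (\<Sum>w\<in>{w. eta w \<noteq> 0}. cnj (complex_of_real (eta w) * word_prod n x w $$ (j, i)))"
    by (intro sum.cong refl) (simp add: e)
  also have "\<dots> = cnj (nc_eval n eta x $$ (j, i))"
    using i j by (simp add: nc_eval_def)
  finally show "nc_eval n eta x $$ (i, j) = cnj (nc_eval n eta x $$ (j, i))" .
qed

section \<open>Lattice combinatorics\<close>

lemma digit_Suc: "0 < d \<Longrightarrow> digit d c (Suc k) = digit d (c div d) k"
  unfolding digit_def by (simp add: div_mult2_eq)

lemma digits_eq: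
  assumes "c < d ^ N" "c' < d ^ N" "\<forall>k<N. digit d c k = digit d c' k"
  shows "c = c'"
  using assms
proof (induction N arbitrary: c c')
  case 0
  then show ?case by simp
next
  case (Suc N c c')
  have d: "0 < d" using Suc.prems(1) by (cases d) auto
  have a: "c div d < d ^ N" using Suc.prems(1) by (intro less_mult_imp_div_less) (simp add: mult.commute)
  have b: "c' div d < d ^ N" using Suc.prems(2) by (intro less_mult_imp_div_less) (simp add: mult.commute)
  have "\<forall>k<N. digit d (c div d) k = digit d (c' div d) k"
    using Suc.prems(3) d by (auto simp: digit_Suc[symmetric])
  then have q: "c div d = c' div d" using Suc.IH[OF a b] by simp
  have "digit d c 0 = digit d c' 0" using Suc.prems(3) by simp
  then have r: "c mod d = c' mod d" by (simp add: digit_def)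
  have "c = d * (c div d) + c mod d" by simp
  also have "\<dots> = d * (c' div d) + c' mod d" using q r by simp
  also have "\<dots> = c'" by simp
  finally show ?case .
qed

lemma enc_bound:
  fixes x :: "nat \<Rightarrow> nat"
  assumes "\<forall>b<R. x b < d"
  shows "(\<Sum>b<R. x b * d ^ b) < d ^ R"
  using assms
proof (induction R)
  case 0
  then show ?case by simp
next
  case (Suc R)
  have ih: "(\<Sum>b<R. x b * d ^ b) < d ^ R" using Suc by auto
  have xr: "x R + 1 \<le> d" using Suc.prems by auto
  have "(\<Sum>b<Suc R. x b * d ^ b) = (\<Sum>b<R. x b * d ^ b) + x R * d ^ R" by simp
  also have "\<dots> < d ^ R + x R * d ^ R" using ih by simp
  also have "\<dots> = (x R + 1) * d ^ R" by simp
  also have "\<dots> \<le> d * d ^ R" using xr by (intro mult_right_mono) auto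
  finally show ?case by simp
qed

lemma digit_less: "0 < d \<Longrightarrow> digit d c k < d"
  unfolding digit_def by simp

lemma card_agree:
  fixes f :: "nat \<Rightarrow> nat"
  assumes d: "0 < d"
  shows "card {c' \<in> {..<d ^ N}. \<forall>k<N. k \<notin> f ` {..<R} \<longrightarrow> digit d c' k = digit d c k} \<le> d ^ R"
proof -
  let ?S = "{c' \<in> {..<d ^ N}. \<forall>k<N. k \<notin> f ` {..<R} \<longrightarrow> digit d c' k = digit d c k}"
  let ?g = "\<lambda>c'. restrict (\<lambda>b. digit d c' (f b)) {..<R}"
  have inj: "inj_on ?g ?S"
  proof (rule inj_onI)
    fix c1 c2 assume c1: "c1 \<in> ?S" and c2: "c2 \<in> ?S" and g: "?g c1 = ?g c2"
    have "\<forall>k<N. digit d c1 k = digit d c2 k"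
    proof (intro allI impI)
      fix k assume k: "k < N"
      show "digit d c1 k = digit d c2 k"
      proof (cases "k \<in> f ` {..<R}")
        case True
        then obtain b where b: "b < R" "k = f b" by auto
        have "?g c1 b = ?g c2 b" using g by simp
        then show ?thesis using b by simp
      next
        case False
        then show ?thesis using c1 c2 k by auto
      qed
    qed
    then show "c1 = c2" using c1 c2 digits_eq[of c1 d N c2] by auto
  qed
  have "?g ` ?S \<subseteq> PiE {..<R} (\<lambda>_. {..<d})"
    by (intro image_subsetI) (simp add: PiE_iff digit_less[OF d])
  then have "card ?S \<le> card (PiE {..<R} (\<lambda>_. {..<d::nat}))"
    by (intro card_inj_on_le[OF inj]) (auto intro: finite_PiE)
  also have "\<dots> = d ^ R" by (simp add: card_PiE)
  finally show ?thesis .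
qed

lemma agree_sum_bound:
  fixes f :: "nat \<Rightarrow> nat" and g :: "nat \<Rightarrow> real"
  assumes d: "0 < d" and M: "0 \<le> M"
    and g: "\<And>c'. c' < d ^ N \<Longrightarrow> g c' \<le> (if (\<forall>k<N. k \<notin> f ` {..<R} \<longrightarrow> digit d c' k = digit d c k) then M else 0)"
  shows "(\<Sum>c'<d ^ N. g c') \<le> real (d ^ R) * M"
proof -
  let ?P = "\<lambda>c'. \<forall>k<N. k \<notin> f ` {..<R} \<longrightarrow> digit d c' k = digit d c k"
  have "(\<Sum>c'<d ^ N. g c') \<le> (\<Sum>c'<d ^ N. if ?P c' then M else 0)"
    using g by (intro sum_mono) auto
  also have "\<dots> = (\<Sum>c'\<in>{c' \<in> {..<d ^ N}. ?P c'}. M)"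
    by (rule sum.inter_filter[symmetric]) simp
  also have "\<dots> = real (card {c' \<in> {..<d ^ N}. ?P c'}) * M" by simp
  also have "\<dots> \<le> real (d ^ R) * M"
    using card_agree[OF d, of N f R c] M by (intro mult_right_mono) auto
  finally show ?thesis by simp
qed

lemma translate_entry:
  assumes "c < d ^ (L ^ nu)" "c' < d ^ (L ^ nu)"
  shows "translate_obs nu d r L ob j $$ (c, c') =
    (if (\<forall>k<L ^ nu. k \<notin> shift nu L r j ` {..<r ^ nu} \<longrightarrow> digit d c k = digit d c' k)
     then ob $$ (\<Sum>b<r ^ nu. digit d c (shift nu L r j b) * d ^ b, \<Sum>b<r ^ nu. digit d c' (shift nu L r j b) * d ^ b)
     else 0)"
  using assms by (simp add: translate_obs_def Let_def)

lemma entry_le_M: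
  fixes ob :: "complex mat"
  assumes "p < D" "q < D"
  shows "cmod (ob $$ (p, q)) \<le> (\<Sum>p<D. \<Sum>q<D. cmod (ob $$ (p, q)))"
proof -
  have "cmod (ob $$ (p, q)) \<le> (\<Sum>q<D. cmod (ob $$ (p, q)))"
    using assms by (intro member_le_sum) auto
  also have "\<dots> \<le> (\<Sum>p<D. \<Sum>q<D. cmod (ob $$ (p, q)))"
    using assms by (intro member_le_sum[of p "{..<D}" "\<lambda>p. \<Sum>q<D. cmod (ob $$ (p, q))"]) (auto intro: sum_nonneg)
  finally show ?thesis .
qed

definition obM :: "nat \<Rightarrow> complex mat \<Rightarrow> real" where
  "obM D ob = (\<Sum>p<D. \<Sum>q<D. cmod (ob $$ (p, q)))"

lemma obM_nonneg: "0 \<le> obM D ob"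
  unfolding obM_def by (intro sum_nonneg) auto

lemma translate_bound:
  assumes d: "0 < d" and c: "c < d ^ (L ^ nu)" and c': "c' < d ^ (L ^ nu)"
    and P: "\<forall>k<L ^ nu. k \<notin> shift nu L r j ` {..<r ^ nu} \<longrightarrow> digit d c k = digit d c' k"
  shows "cmod (translate_obs nu d r L ob j $$ (c, c')) \<le> obM (d ^ (r ^ nu)) ob"
proof -
  have "(\<Sum>b<r ^ nu. digit d c (shift nu L r j b) * d ^ b) < d ^ (r ^ nu)"
    by (intro enc_bound) (simp add: digit_less[OF d])
  moreover have "(\<Sum>b<r ^ nu. digit d c' (shift nu L r j b) * d ^ b) < d ^ (r ^ nu)"
    by (intro enc_bound) (simp add: digit_less[OF d])
  ultimately show ?thesis unfolding translate_entry[OF c c'] using P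
    by (simp add: obM_def entry_le_M)
qed

lemma translate_zero:
  assumes c: "c < d ^ (L ^ nu)" and c': "c' < d ^ (L ^ nu)"
    and P: "\<not> (\<forall>k<L ^ nu. k \<notin> shift nu L r j ` {..<r ^ nu} \<longrightarrow> digit d c k = digit d c' k)"
  shows "translate_obs nu d r L ob j $$ (c, c') = 0"
  unfolding translate_entry[OF c c'] by (rule if_not_P[OF P])

lemma translate_row:
  assumes d: "0 < d" and c: "c < d ^ (L ^ nu)"
  shows "(\<Sum>c'<d ^ (L ^ nu). cmod (translate_obs nu d r L ob j $$ (c, c'))) \<le> real (d ^ (r ^ nu)) * obM (d ^ (r ^ nu)) ob"
proof (rule agree_sum_bound[OF d obM_nonneg, where f = "shift nu L r j" and c = c])
  fix c' assume c': "c' < d ^ (L ^ nu)"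
  show "cmod (translate_obs nu d r L ob j $$ (c, c')) \<le> (if \<forall>k<L ^ nu. k \<notin> shift nu L r j ` {..<r ^ nu} \<longrightarrow> digit d c' k = digit d c k then obM (d ^ (r ^ nu)) ob else 0)"
  proof (cases "\<forall>k<L ^ nu. k \<notin> shift nu L r j ` {..<r ^ nu} \<longrightarrow> digit d c k = digit d c' k")
    case True
    then have "\<forall>k<L ^ nu. k \<notin> shift nu L r j ` {..<r ^ nu} \<longrightarrow> digit d c' k = digit d c k" by auto
    then show ?thesis using translate_bound[OF d c c' True] by simp
  next
    case False
    then have "\<not> (\<forall>k<L ^ nu. k \<notin> shift nu L r j ` {..<r ^ nu} \<longrightarrow> digit d c' k = digit d c k)" by auto
    then show ?thesis using translate_zero[OF c c' False] by (simp add: obM_nonneg)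
  qed
qed

lemma translate_col:
  assumes d: "0 < d" and c': "c' < d ^ (L ^ nu)"
  shows "(\<Sum>c<d ^ (L ^ nu). cmod (translate_obs nu d r L ob j $$ (c, c'))) \<le> real (d ^ (r ^ nu)) * obM (d ^ (r ^ nu)) ob"
proof (rule agree_sum_bound[OF d obM_nonneg, where f = "shift nu L r j" and c = c'])
  fix c assume c: "c < d ^ (L ^ nu)"
  show "cmod (translate_obs nu d r L ob j $$ (c, c')) \<le> (if \<forall>k<L ^ nu. k \<notin> shift nu L r j ` {..<r ^ nu} \<longrightarrow> digit d c k = digit d c' k then obM (d ^ (r ^ nu)) ob else 0)"
  proof (cases "\<forall>k<L ^ nu. k \<notin> shift nu L r j ` {..<r ^ nu} \<longrightarrow> digit d c k = digit d c' k")
    case True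
    then show ?thesis using translate_bound[OF d c c' True] by simp
  next
    case False
    then show ?thesis using translate_zero[OF c c' False] by (simp add: obM_nonneg)
  qed
qed

lemma Xhat_opnorm:
  assumes d: "0 < d"
  shows "opnorm (Xhat nu d r L ob) \<le> real (L ^ nu) * (real (d ^ (r ^ nu)) * obM (d ^ (r ^ nu)) ob)"
proof -
  let ?n = "d ^ (L ^ nu)"
  let ?T = "\<lambda>j. translate_obs nu d r L ob j"
  let ?B = "real (d ^ (r ^ nu)) * obM (d ^ (r ^ nu)) ob"
  have X: "Xhat nu d r L ob \<in> carrier_mat ?n ?n" by (simp add: Xhat_def)
  have ent: "Xhat nu d r L ob $$ (c, c') = (\<Sum>j<L ^ nu. ?T j $$ (c, c'))" if "c < ?n" "c' < ?n" for c c'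
    using that by (simp add: Xhat_def)
  have rows: "(\<Sum>c'<?n. cmod (Xhat nu d r L ob $$ (c, c'))) \<le> real (L ^ nu) * ?B" if c: "c < ?n" for c
  proof -
    have "(\<Sum>c'<?n. cmod (Xhat nu d r L ob $$ (c, c'))) \<le> (\<Sum>c'<?n. \<Sum>j<L ^ nu. cmod (?T j $$ (c, c')))"
      using c by (intro sum_mono) (simp add: ent norm_sum)
    also have "\<dots> = (\<Sum>j<L ^ nu. \<Sum>c'<?n. cmod (?T j $$ (c, c')))" by (rule sum.swap)
    also have "\<dots> \<le> (\<Sum>j<L ^ nu. ?B)" by (intro sum_mono translate_row[OF d c])
    finally show ?thesis by simp
  qed
  have cols: "(\<Sum>c<?n. cmod (Xhat nu d r L ob $$ (c, c'))) \<le> real (L ^ nu) * ?B" if c': "c' < ?n" for c'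
  proof -
    have "(\<Sum>c<?n. cmod (Xhat nu d r L ob $$ (c, c'))) \<le> (\<Sum>c<?n. \<Sum>j<L ^ nu. cmod (?T j $$ (c, c')))"
      using c' by (intro sum_mono) (simp add: ent norm_sum)
    also have "\<dots> = (\<Sum>j<L ^ nu. \<Sum>c<?n. cmod (?T j $$ (c, c')))" by (rule sum.swap)
    also have "\<dots> \<le> (\<Sum>j<L ^ nu. ?B)" by (intro sum_mono translate_col[OF d c'])
    finally show ?thesis by simp
  qed
  have nn: "0 \<le> real (L ^ nu) * ?B" using obM_nonneg by simp
  show ?thesis by (rule opnorm_schur_test[OF X nn rows cols])
qed

lemma smult_comm:
  fixes A B :: "complex mat"
  assumes A: "A \<in> carrier_mat n n" and B: "B \<in> carrier_mat n n" and AB: "A * B = B * A"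
  shows "(c \<cdot>\<^sub>m A) * (c \<cdot>\<^sub>m B) = (c \<cdot>\<^sub>m B) * (c \<cdot>\<^sub>m A)"
proof -
  have "(c \<cdot>\<^sub>m A) * (c \<cdot>\<^sub>m B) = c \<cdot>\<^sub>m (c \<cdot>\<^sub>m (A * B))"
    by (simp add: mult_smult_assoc_mat[OF A smult_carrier_mat[OF B]] mult_smult_distrib[OF A B])
  also have "\<dots> = (c \<cdot>\<^sub>m B) * (c \<cdot>\<^sub>m A)"
    by (simp add: mult_smult_assoc_mat[OF B smult_carrier_mat[OF A]] mult_smult_distrib[OF B A] AB)
  finally show ?thesis .
qed

lemma diff_diff_mat:
  fixes A B :: "complex mat"
  assumes A: "A \<in> carrier_mat n n" and B: "B \<in> carrier_mat n n"
  shows "A - (A - B) = B"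
proof -
  have dA: "dim_row A = n" "dim_col A = n" using A by auto
  have dB: "dim_row B = n" "dim_col B = n" using B by auto
  show ?thesis by (rule eq_matI) (simp_all add: dA dB)
qed

theorem theorem1:
  fixes nu d r m :: nat
    and ob :: "nat \<Rightarrow> complex mat"
    and Xc :: "nat \<Rightarrow> nat \<Rightarrow> complex mat"
    and eta :: "nat list \<Rightarrow> real"
  assumes "nu \<ge> 1" and "d \<ge> 1" and "r \<ge> 1"
    and "\<forall>i<m. selfadjoint (d ^ (r ^ nu)) (ob i)"
    and "\<forall>L. \<forall>i<m. selfadjoint (d ^ (L ^ nu)) (Xc L i)"
    and "\<forall>i<m. (\<lambda>L. opnorm (Xhat nu d r L (ob i) - Xc L i)) \<longlonglongrightarrow> 0"
    and "\<forall>L. \<forall>i<m. \<forall>j<m. Xc L i * Xc L j = Xc L j * Xc L i"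
    and "finite {w. eta w \<noteq> 0}"
    and "\<forall>w. eta w \<noteq> 0 \<longrightarrow> set w \<subseteq> {..<m}"
    and "\<forall>L\<ge>r. selfadjoint (d ^ (L ^ nu))
            (nc_eval (d ^ (L ^ nu)) eta (\<lambda>i. (1 / of_nat (L ^ nu)) \<cdot>\<^sub>m Xhat nu d r L (ob i)))"
    and "convergent (\<lambda>L. psi (d ^ (L ^ nu)) (L ^ nu) eta (\<lambda>i. Xhat nu d r L (ob i)))"
    and "convergent (\<lambda>L. psi (d ^ (L ^ nu)) (L ^ nu) eta (Xc L))"
  shows "lim (\<lambda>L. psi (d ^ (L ^ nu)) (L ^ nu) eta (\<lambda>i. Xhat nu d r L (ob i)))
       = lim (\<lambda>L. psi (d ^ (L ^ nu)) (L ^ nu) eta (Xc L))"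
proof -
  have d0: "0 < d" using assms(2) by simp
  have XcH: "\<And>L i. i < m \<Longrightarrow> selfadjoint (d ^ (L ^ nu)) (Xc L i)" using assms(5) by blast
  have Xcc: "\<And>L i. i < m \<Longrightarrow> Xc L i \<in> carrier_mat (d ^ (L ^ nu)) (d ^ (L ^ nu))"
    using XcH unfolding selfadjoint_def by blast
  have Xhc: "\<And>L i. Xhat nu d r L (ob i) \<in> carrier_mat (d ^ (L ^ nu)) (d ^ (L ^ nu))"
    by (simp add: Xhat_def)
  define xh where "xh L = (\<lambda>i. (1 / of_nat (L ^ nu) :: complex) \<cdot>\<^sub>m Xhat nu d r L (ob i))" for L
  define xc where "xc L = (\<lambda>i. (1 / of_nat (L ^ nu) :: complex) \<cdot>\<^sub>m Xc L i)" for L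
  define K0 where "K0 = (\<Sum>i<m. real (d ^ (r ^ nu)) * obM (d ^ (r ^ nu)) (ob i))"
  define K where "K = K0 + 1"
  define \<delta> where "\<delta> L = (\<Sum>i<m. opnorm (xh L i - xc L i))" for L
  define S where "S = {w. eta w \<noteq> 0}"
  define C where "C = (\<Sum>w\<in>S. \<bar>eta w\<bar> * (real (length w) * K ^ length w))"
  have K00: "0 \<le> K0" unfolding K0_def using obM_nonneg by (intro sum_nonneg) simp
  have K1: "1 \<le> K" unfolding K_def using K00 by simp
  have xhc: "\<And>L i. xh L i \<in> carrier_mat (d ^ (L ^ nu)) (d ^ (L ^ nu))"
    unfolding xh_def using Xhc by simp
  have xcc: "\<And>L i. i < m \<Longrightarrow> xc L i \<in> carrier_mat (d ^ (L ^ nu)) (d ^ (L ^ nu))"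
    unfolding xc_def using Xcc by simp
  have Npos: "0 < L ^ nu" if "1 \<le> L" for L :: nat using that by simp
  have cm: "cmod (1 / of_nat (L ^ nu) :: complex) = 1 / real (L ^ nu)" for L
    by (simp add: norm_divide norm_power)
  have F1: "opnorm (xh L i) \<le> K0" if L: "1 \<le> L" and i: "i < m" for L i
  proof -
    have "opnorm (xh L i) \<le> cmod (1 / of_nat (L ^ nu) :: complex) * opnorm (Xhat nu d r L (ob i))"
      unfolding xh_def by (rule opnorm_smult)
    also have "\<dots> \<le> (1 / real (L ^ nu)) * (real (L ^ nu) * (real (d ^ (r ^ nu)) * obM (d ^ (r ^ nu)) (ob i)))"
      unfolding cm by (intro mult_left_mono Xhat_opnorm[OF d0]) simp
    also have "\<dots> = real (d ^ (r ^ nu)) * obM (d ^ (r ^ nu)) (ob i)" using Npos[OF L] by simp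
    also have "\<dots> \<le> K0" unfolding K0_def using i obM_nonneg
      by (intro member_le_sum[of i "{..<m}" "\<lambda>i. real (d ^ (r ^ nu)) * obM (d ^ (r ^ nu)) (ob i)"]) auto
    finally show ?thesis .
  qed
  have dif_le: "opnorm (xh L i - xc L i) \<le> opnorm (Xhat nu d r L (ob i) - Xc L i)" if L: "1 \<le> L" and i: "i < m" for L i
  proof -
    have "xh L i - xc L i = (1 / of_nat (L ^ nu) :: complex) \<cdot>\<^sub>m (Xhat nu d r L (ob i) - Xc L i)"
      unfolding xh_def xc_def by (rule smult_diff_mat[OF Xhc Xcc[OF i]])
    then have "opnorm (xh L i - xc L i) \<le> cmod (1 / of_nat (L ^ nu) :: complex) * opnorm (Xhat nu d r L (ob i) - Xc L i)"
      using opnorm_smult by metis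
    also have "\<dots> \<le> 1 * opnorm (Xhat nu d r L (ob i) - Xc L i)"
      unfolding cm using Npos[OF L] opnorm_nonneg by (intro mult_right_mono) auto
    finally show ?thesis by simp
  qed
  have F2: "\<delta> \<longlonglongrightarrow> 0"
    unfolding \<delta>_def
  proof (rule tendsto_null_sum)
    fix i assume "i \<in> {..<m}"
    then have i: "i < m" by simp
    have lim: "(\<lambda>L. opnorm (Xhat nu d r L (ob i) - Xc L i)) \<longlonglongrightarrow> 0" using assms(6) i by blast
    have "\<forall>\<^sub>F L in sequentially. norm (opnorm (xh L i - xc L i)) \<le> opnorm (Xhat nu d r L (ob i) - Xc L i)"
      using eventually_ge_at_top[of "1::nat"] by eventually_elim (use dif_le i opnorm_nonneg in auto)
    then show "(\<lambda>L. opnorm (xh L i - xc L i)) \<longlonglongrightarrow> 0" using lim by (rule Lim_null_comparison)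
  qed
  have dle: "opnorm (xh L i - xc L i) \<le> \<delta> L" if "i < m" for L i
    unfolding \<delta>_def using that opnorm_nonneg
    by (intro member_le_sum[of i "{..<m}" "\<lambda>i. opnorm (xh L i - xc L i)"]) auto
  have d00: "0 \<le> \<delta> L" for L unfolding \<delta>_def using opnorm_nonneg by (intro sum_nonneg) auto
  have F4: "opnorm (xc L i) \<le> K" if L: "1 \<le> L" and dl: "\<delta> L \<le> 1" and i: "i < m" for L i
  proof -
    have "xc L i = xh L i - (xh L i - xc L i)" using diff_diff_mat[OF xhc xcc[OF i]] by simp
    then have "opnorm (xc L i) \<le> opnorm (xh L i) + opnorm (xh L i - xc L i)"
      using opnorm_diff[OF xhc minus_carrier_mat[OF xcc[OF i]]] by metis
    also have "\<dots> \<le> K0 + 1" using F1[OF L i] dle[OF i, of L] dl by simp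
    finally show ?thesis unfolding K_def .
  qed
  have F5: "opnorm (nc_eval (d ^ (L ^ nu)) eta (xh L) - nc_eval (d ^ (L ^ nu)) eta (xc L)) \<le> C * \<delta> L"
    if L: "1 \<le> L" and dl: "\<delta> L \<le> 1" for L
  proof -
    let ?n = "d ^ (L ^ nu)"
    have wi: "\<forall>i\<in>set w. xh L i \<in> carrier_mat ?n ?n \<and> xc L i \<in> carrier_mat ?n ?n \<and> opnorm (xh L i) \<le> K
      \<and> opnorm (xc L i) \<le> K \<and> opnorm (xh L i - xc L i) \<le> \<delta> L" if "w \<in> S" for w
    proof
      fix i assume "i \<in> set w"
      then have i: "i < m" using assms(9) that unfolding S_def by auto
      show "xh L i \<in> carrier_mat ?n ?n \<and> xc L i \<in> carrier_mat ?n ?n \<and> opnorm (xh L i) \<le> K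
      \<and> opnorm (xc L i) \<le> K \<and> opnorm (xh L i - xc L i) \<le> \<delta> L"
        using xhc xcc[OF i] F1[OF L i] F4[OF L dl i] dle[OF i] K_def by auto
    qed
    have "opnorm (nc_eval ?n eta (xh L) - nc_eval ?n eta (xc L))
        \<le> (\<Sum>w\<in>S. \<bar>eta w\<bar> * opnorm (word_prod ?n (xh L) w - word_prod ?n (xc L) w))"
      unfolding S_def
    proof (rule nc_eval_diff[OF assms(8)])
      show "\<forall>w. eta w \<noteq> 0 \<longrightarrow> word_prod ?n (xh L) w \<in> carrier_mat ?n ?n \<and> word_prod ?n (xc L) w \<in> carrier_mat ?n ?n"
      proof (intro allI impI conjI)
        fix w assume "eta w \<noteq> 0"
        then have "w \<in> S" unfolding S_def by simp
        from wi[OF this] show "word_prod ?n (xh L) w \<in> carrier_mat ?n ?n" "word_prod ?n (xc L) w \<in> carrier_mat ?n ?n"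
          by (auto intro!: wp_carrier)
      qed
    qed
    also have "\<dots> \<le> (\<Sum>w\<in>S. \<bar>eta w\<bar> * (real (length w) * K ^ length w * \<delta> L))"
      by (intro sum_mono mult_left_mono wp_diff[OF _ K1 d00] wi) auto
    also have "\<dots> = (\<Sum>w\<in>S. \<bar>eta w\<bar> * (real (length w) * K ^ length w)) * \<delta> L"
      by (subst sum_distrib_right) (simp add: mult_ac)
    also have "\<dots> = C * \<delta> L" unfolding C_def ..
    finally show ?thesis .
  qed
  have F6: "\<bar>psi (d ^ (L ^ nu)) (L ^ nu) eta (\<lambda>i. Xhat nu d r L (ob i)) - psi (d ^ (L ^ nu)) (L ^ nu) eta (Xc L)\<bar>
      \<le> opnorm (nc_eval (d ^ (L ^ nu)) eta (xh L) - nc_eval (d ^ (L ^ nu)) eta (xc L))"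
    if L: "r \<le> L" for L
  proof -
    have L1: "1 \<le> L" using L assms(3) by simp
    have H1: "selfadjoint (d ^ (L ^ nu)) (nc_eval (d ^ (L ^ nu)) eta (xh L))"
      unfolding xh_def using assms(10) L by simp
    have xcH: "\<forall>i\<in>{..<m}. selfadjoint (d ^ (L ^ nu)) (xc L i)"
    proof
      fix i assume "i \<in> {..<m}"
      then have i: "i < m" by simp
      have "(1 / of_nat (L ^ nu) :: complex) = complex_of_real (1 / real (L ^ nu))" by simp
      then show "selfadjoint (d ^ (L ^ nu)) (xc L i)"
        unfolding xc_def using selfadjoint_smult_real[OF XcH[OF i]] by metis
    qed
    have xcC: "\<forall>i\<in>{..<m}. \<forall>j\<in>{..<m}. xc L i * xc L j = xc L j * xc L i"
      unfolding xc_def using smult_comm[OF Xcc Xcc] assms(7) by auto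
    have H2: "selfadjoint (d ^ (L ^ nu)) (nc_eval (d ^ (L ^ nu)) eta (xc L))"
      by (rule nc_eval_selfadjoint[OF assms(8) assms(9) xcH xcC])
    show ?thesis
      by (rule psi_diff[OF H1 H2 _ Npos[OF L1] xh_def xc_def]) (use d0 in simp)
  qed
  define ph where "ph L = psi (d ^ (L ^ nu)) (L ^ nu) eta (\<lambda>i. Xhat nu d r L (ob i))" for L
  define pc where "pc L = psi (d ^ (L ^ nu)) (L ^ nu) eta (Xc L)" for L
  have ev1: "\<forall>\<^sub>F L in sequentially. \<delta> L < 1"
    using F2 by (rule order_tendstoD(2)) simp
  have "\<forall>\<^sub>F L in sequentially. norm (ph L - pc L) \<le> C * \<delta> L"
    using ev1 eventually_ge_at_top[of r]
  proof eventually_elim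
    case (elim L)
    have L1: "1 \<le> L" using elim assms(3) by simp
    have "norm (ph L - pc L) \<le> opnorm (nc_eval (d ^ (L ^ nu)) eta (xh L) - nc_eval (d ^ (L ^ nu)) eta (xc L))"
      unfolding ph_def pc_def using F6 elim by simp
    also have "\<dots> \<le> C * \<delta> L" using F5[OF L1] elim by simp
    finally show ?case .
  qed
  moreover have "(\<lambda>L. C * \<delta> L) \<longlonglongrightarrow> 0" using tendsto_mult_right_zero[OF F2] by simp
  ultimately have diff0: "(\<lambda>L. ph L - pc L) \<longlonglongrightarrow> 0" by (rule Lim_null_comparison)
  have "ph \<longlonglongrightarrow> lim ph" using assms(11) unfolding ph_def by (simp add: convergent_LIMSEQ_iff)
  moreover have "pc \<longlonglongrightarrow> lim pc" using assms(12) unfolding pc_def by (simp add: convergent_LIMSEQ_iff)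
  ultimately have "(\<lambda>L. ph L - pc L) \<longlonglongrightarrow> lim ph - lim pc" by (rule tendsto_diff)
  with diff0 have "lim ph - lim pc = 0" using LIMSEQ_unique by blast
  then show ?thesis unfolding ph_def pc_def by simp
qed

end
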